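(* Consider the problem $\min_{\ell\le x\le u}H(x)$, $H(x)=\mathbb{E}_\xi[h(x,\xi)]$, under Assumption 1, run the Comparison-Based Algorithm (CBA) described in the context with functions $f_\pm$ satisfying (C1)–(C3), let $x^*$ be any optimal solution, $G^2=K_1^2+2K_3$ and $\sigma^2=K_2^2+2K_3$. (i) If (A5)(a) holds, then with constant stepsize $\eta_t=\eta\in(0,+\infty)$, $$\mathbb{E}(H(\bar x_T)-H(x^* ))\le \frac{(x_1-x^* )^2}{2\eta T}+\frac{\eta G^2}{2}.$$ (ii) If (A5)(b) holds, then with constant stepsize $\eta_t=\eta\in(0,\frac1L)$, $$\mathbb{E}(H(\bar x_T)-H(x^* ))\le \frac{(x_1-x^* )^2}{2\eta T}+\frac{H(x_1)-H(x^* )}{T}+\frac{\sigma^2}{1/\eta-L}.$$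
   Context: Setting: $-\infty\le\ell\le u\le+\infty$ (with $\ell\le x$ meaning $x>-\infty$ if $\ell=-\infty$, similarly for $u$); $\xi$ a real random variable with c.d.f. $F$, support $\Xi$, $\underline{s}=\inf\Xi$, $\bar s=\sup\Xi$; $h:\mathbb{R}^2\to\mathbb{R}$, $H(x)=\mathbb{E}_\xi[h(x,\xi)]$. Assumption 1: (A1) $\xi$ has a continuous distribution. (A2) For each $\xi$, $x\mapsto h(x,\xi)$ is continuously differentiable on $[\ell,\xi)$ and $(\xi,u]$ with derivative $h'_x(x,\xi)$; for every $x\in[\ell,u]$, $h'_-(x):=\lim_{z\to x^-}h'_x(x,z)$ and $h'_+(x):=\lim_{z\to x^+}h'_x(x,z)$ exist and are finite. (A3) For $x\in[\ell,u]$, $x\neq\xi$, $h''_{x,\xi}(x,\xi)=\partial^2h/\partial\xi\partial x$ exists. (A4) $H$ is differentiable and $\mu$-convex on $[\ell,u]$ for some $\mu\ge 0$: $H(x_2)\ge H(x_1)+H'(x_1)(x_2-x_1)+\frac\mu2(x_2-x_1)^2$ for all $x_1,x_2\in[\ell,u]$; and $\mathbb{E}_\xi h'_x(x,\xi)=H'(x)$ on $[\ell,u]$. (A5) (a) $\mathbb{E}_\xi(h'_x(x,\xi))^2\le K_1^2$ for all $x\in[\ell,u]$, or (b) $H'$ is $L$-Lipschitz on $[\ell,u]$ and $\mathbb{E}_\xi(h'_x(x,\xi)-H'(x))^2\le K_2^2$ for all $x\in[\ell,u]$. Conditions: (C1) $f_-(x,z)=0$ for $z\ge x$, $f_-(x,z)>0$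 for $\underline s\le z<x$, $\int_{-\infty}^{x^-}f_-(x,z)dz=1$. (C2) $f_+(x,z)=0$ for $z\le x$, $f_+(x,z)>0$ for $\bar s\ge z>x$, $\int_{x^+}^\infty f_+(x,z)dz=1$. (C3) There is $K_3$ with $\int_{\underline s}^{x^-}\frac{F(z)(h''_{x,z}(x,z))^2}{f_-(x,z)}dz\le K_3$ and $\int_{x^+}^{\bar s}\frac{(1-F(z))(h''_{x,z}(x,z))^2}{f_+(x,z)}dz\le K_3$ for all $x\in[\ell,u]$. CBA: given $x_1\in[\ell,u]$, stepsizes $\eta_t>0$ and horizon $T$, for $t=1,\dots,T$: draw $\xi_t$ from the distribution of $\xi$ independently of the past (resampling if $\xi_t=x_t$). If $\xi_t<x_t$, draw $z_t$ with density $f_-(x_t,\cdot)$ and set $g_t=h'_-(x_t)$ if $z_t<\xi_t$, $g_t=h'_-(x_t)-h''_{x,z}(x_t,z_t)/f_-(x_t,z_t)$ if $z_t\ge\xi_t$. If $\xi_t>x_t$, draw $z_t$ with density $f_+(x_t,\cdot)$ and set $g_t=h'_+(x_t)$ if $z_t>\xi_t$, $g_t=h'_+(x_t)+h''_{x,z}(x_t,z_t)/f_+(x_t,z_t)$ if $z_t\le\xi_t$. Set $x_{t+1}=\max(\ell,\min(u,x_t-\eta_tg_t))$. Output $\bar x_T=\frac1T\sum_{t=1}^Tx_t$. *)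

theory Defs
  imports "HOL-Probability.Probability"
begin

definition feas :: "ereal \<Rightarrow> ereal \<Rightarrow> real set" where
  "feas l u = {x. l \<le> ereal x \<and> ereal x \<le> u}"

definition proj :: "ereal \<Rightarrow> ereal \<Rightarrow> real \<Rightarrow> real" where
  "proj l u y = real_of_ereal (max l (min u (ereal y)))"

definition supp_meas :: "real measure \<Rightarrow> real set" where
  "supp_meas D = {x. \<forall>e>0. 0 < measure D {x - e<..<x + e}}"

definition cdf_of :: "real measure \<Rightarrow> real \<Rightarrow> real" where
  "cdf_of D z = measure D {..z}"

definition grad_minus :: "(real \<Rightarrow> real) \<Rightarrow> (real \<Rightarrow> real \<Rightarrow> real) \<Rightarrow> (real \<Rightarrow> real \<Rightarrow> real)
    \<Rightarrow> real \<Rightarrow> real \<Rightarrow> real \<Rightarrow> real" where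
  "grad_minus hm hxz fm x xi z = (if z < xi then hm x else hm x - hxz x z / fm x z)"

definition grad_plus :: "(real \<Rightarrow> real) \<Rightarrow> (real \<Rightarrow> real \<Rightarrow> real) \<Rightarrow> (real \<Rightarrow> real \<Rightarrow> real)
    \<Rightarrow> real \<Rightarrow> real \<Rightarrow> real \<Rightarrow> real" where
  "grad_plus hp hxz fp x xi z = (if xi < z then hp x else hp x + hxz x z / fp x z)"

text \<open>One CBA iteration as a Markov kernel: distribution of x_{t+1} given x_t = x.
  xi is drawn from D conditioned on xi \<noteq> x (the resampling step), then z from the
  density f_-(x,.) or f_+(x,.), then the projected gradient step with stepsize eta.\<close>
definition cba_step :: "real measure \<Rightarrow> (real \<Rightarrow> real \<Rightarrow> real) \<Rightarrow> (real \<Rightarrow> real \<Rightarrow> real)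
    \<Rightarrow> (real \<Rightarrow> real) \<Rightarrow> (real \<Rightarrow> real) \<Rightarrow> (real \<Rightarrow> real \<Rightarrow> real)
    \<Rightarrow> real \<Rightarrow> ereal \<Rightarrow> ereal \<Rightarrow> real \<Rightarrow> real measure" where
  "cba_step D fm fp hm hp hxz eta l u x =
     uniform_measure D {xi. xi \<noteq> x} \<bind> (\<lambda>xi.
       if xi < x then
         density lborel (\<lambda>z. ennreal (fm x z)) \<bind>
           (\<lambda>z. return borel (proj l u (x - eta * grad_minus hm hxz fm x xi z)))
       else
         density lborel (\<lambda>z. ennreal (fp x z)) \<bind>
           (\<lambda>z. return borel (proj l u (x - eta * grad_plus hp hxz fp x xi z))))"

text \<open>Run n iterations of a kernel K from state x, accumulating the sum of the
  visited iterates: cba_run K T x_1 0 is the joint law of (x_{T+1}, x_1 + ... + x_T).\<close>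
fun cba_run :: "(real \<Rightarrow> real measure) \<Rightarrow> nat \<Rightarrow> real \<Rightarrow> real \<Rightarrow> (real \<times> real) measure" where
  "cba_run K 0 x s = return borel (x, s)"
| "cba_run K (Suc n) x s = K x \<bind> (\<lambda>x'. cba_run K n x' (s + x))"

end

theory Submission
  imports Defs "HOL-Probability.Probability"
begin

lemma nn_integral_distr_le:
  fixes F :: "'b \<Rightarrow> ennreal"
  assumes F: "F \<in> borel_measurable N"
  shows "(\<integral>\<^sup>+y. F y \<partial>distr M N f) \<le> (\<integral>\<^sup>+x. F (f x) \<partial>M)"
proof -
  let ?\<nu> = "distr M N f"
  have "\<exists>\<phi>\<in>borel_measurable M. (\<forall>x\<in>space M. f x \<in> space N \<longrightarrow> \<phi> x \<le> F (f x))
      \<and> (\<forall>x\<in>space M. f x \<notin> space N \<longrightarrow> \<phi> x = 0)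
      \<and> (\<integral>\<^sup>+y. F y \<partial>?\<nu>) \<le> (\<integral>\<^sup>+x. \<phi> x \<partial>M)"
    using F
  proof (induct rule: borel_measurable_induct)
    case (cong f' g)
    then obtain \<phi> where "\<phi>\<in>borel_measurable M" "\<forall>x\<in>space M. f x \<in> space N \<longrightarrow> \<phi> x \<le> g (f x)"
      "\<forall>x\<in>space M. f x \<notin> space N \<longrightarrow> \<phi> x = 0" "(\<integral>\<^sup>+y. g y \<partial>?\<nu>) \<le> (\<integral>\<^sup>+x. \<phi> x \<partial>M)"
      by blast
    moreover have "(\<integral>\<^sup>+y. f' y \<partial>?\<nu>) = (\<integral>\<^sup>+y. g y \<partial>?\<nu>)"
      by (rule nn_integral_cong) (use cong in auto)
    ultimately show ?case using cong by (intro bexI[of _ \<phi>]) auto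
  next
    case (set A)
    define S where "S = f -` A \<inter> space M"
    define \<phi> where "\<phi> = (if S \<in> sets M then indicator S else (\<lambda>_. 0::ennreal))"
    have m: "\<phi> \<in> borel_measurable M" unfolding \<phi>_def by auto
    have "(\<integral>\<^sup>+y. indicator A y \<partial>?\<nu>) = emeasure ?\<nu> A"
      using set by (simp add: nn_integral_indicator)
    also have "\<dots> \<le> emeasure M S"
      unfolding distr_def emeasure_measure_of_conv S_def
      using set by (auto simp: sets.sigma_sets_eq)
    also have "\<dots> = (\<integral>\<^sup>+x. \<phi> x \<partial>M)"
      unfolding \<phi>_def by (auto simp: emeasure_notin_sets)
    finally have "(\<integral>\<^sup>+y. indicator A y \<partial>?\<nu>) \<le> (\<integral>\<^sup>+x. \<phi> x \<partial>M)" .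
    moreover have "\<forall>x\<in>space M. f x \<in> space N \<longrightarrow> \<phi> x \<le> indicator A (f x)"
      unfolding \<phi>_def S_def by (auto simp: indicator_def)
    moreover have "\<forall>x\<in>space M. f x \<notin> space N \<longrightarrow> \<phi> x = 0"
      unfolding \<phi>_def S_def using sets.sets_into_space[OF set] by (auto simp: indicator_def)
    ultimately show ?case using m by blast
  next
    case (mult u c)
    then obtain \<phi> where p: "\<phi>\<in>borel_measurable M" "\<forall>x\<in>space M. f x \<in> space N \<longrightarrow> \<phi> x \<le> u (f x)"
      "\<forall>x\<in>space M. f x \<notin> space N \<longrightarrow> \<phi> x = 0" "(\<integral>\<^sup>+y. u y \<partial>?\<nu>) \<le> (\<integral>\<^sup>+x. \<phi> x \<partial>M)"
      by blast
    have "(\<integral>\<^sup>+y. c * u y \<partial>?\<nu>) = c * (\<integral>\<^sup>+y. u y \<partial>?\<nu>)"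
      using mult by (intro nn_integral_cmult) auto
    also have "\<dots> \<le> c * (\<integral>\<^sup>+x. \<phi> x \<partial>M)" using p(4) by (rule mult_left_mono) auto
    also have "\<dots> = (\<integral>\<^sup>+x. c * \<phi> x \<partial>M)" using p(1) by (intro nn_integral_cmult[symmetric]) auto
    finally show ?case using p by (intro bexI[of _ "\<lambda>x. c * \<phi> x"]) (auto intro: mult_left_mono)
  next
    case (add u v)
    then obtain \<phi> where p: "\<phi>\<in>borel_measurable M" "\<forall>x\<in>space M. f x \<in> space N \<longrightarrow> \<phi> x \<le> u (f x)"
      "\<forall>x\<in>space M. f x \<notin> space N \<longrightarrow> \<phi> x = 0" "(\<integral>\<^sup>+y. u y \<partial>?\<nu>) \<le> (\<integral>\<^sup>+x. \<phi> x \<partial>M)"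
      by blast
    from add obtain \<psi> where q: "\<psi>\<in>borel_measurable M" "\<forall>x\<in>space M. f x \<in> space N \<longrightarrow> \<psi> x \<le> v (f x)"
      "\<forall>x\<in>space M. f x \<notin> space N \<longrightarrow> \<psi> x = 0" "(\<integral>\<^sup>+y. v y \<partial>?\<nu>) \<le> (\<integral>\<^sup>+x. \<psi> x \<partial>M)"
      by blast
    have "(\<integral>\<^sup>+y. v y + u y \<partial>?\<nu>) = (\<integral>\<^sup>+y. v y \<partial>?\<nu>) + (\<integral>\<^sup>+y. u y \<partial>?\<nu>)"
      using add by (intro nn_integral_add) auto
    also have "\<dots> \<le> (\<integral>\<^sup>+x. \<psi> x \<partial>M) + (\<integral>\<^sup>+x. \<phi> x \<partial>M)" using p(4) q(4) by (intro add_mono)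
    also have "\<dots> = (\<integral>\<^sup>+x. \<psi> x + \<phi> x \<partial>M)" using p(1) q(1) by (intro nn_integral_add[symmetric]) auto
    finally show ?case using p q by (intro bexI[of _ "\<lambda>x. \<psi> x + \<phi> x"]) (auto intro: add_mono)
  next
    case (seq U)
    then obtain \<phi> where p: "\<And>i. \<phi> i \<in>borel_measurable M" "\<And>i. \<forall>x\<in>space M. f x \<in> space N \<longrightarrow> \<phi> i x \<le> U i (f x)"
      "\<And>i. \<forall>x\<in>space M. f x \<notin> space N \<longrightarrow> \<phi> i x = 0" "\<And>i. (\<integral>\<^sup>+y. U i y \<partial>?\<nu>) \<le> (\<integral>\<^sup>+x. \<phi> i x \<partial>M)"
      by metis
    have "(\<integral>\<^sup>+y. (SUP i. U i) y \<partial>?\<nu>) = (SUP i. \<integral>\<^sup>+y. U i y \<partial>?\<nu>)"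
      unfolding SUP_apply using seq by (intro nn_integral_monotone_convergence_SUP) auto
    also have "\<dots> \<le> (SUP i. \<integral>\<^sup>+x. \<phi> i x \<partial>M)" using p(4) by (intro SUP_mono) auto
    also have "\<dots> \<le> (\<integral>\<^sup>+x. (SUP i. \<phi> i x) \<partial>M)"
      by (intro SUP_least nn_integral_mono) (auto intro: SUP_upper)
    finally have 1: "(\<integral>\<^sup>+y. (SUP i. U i) y \<partial>?\<nu>) \<le> (\<integral>\<^sup>+x. (SUP i. \<phi> i x) \<partial>M)" .
    have 2: "\<forall>x\<in>space M. f x \<in> space N \<longrightarrow> (SUP i. \<phi> i x) \<le> (SUP i. U i) (f x)"
      using p(2) by (auto simp: SUP_apply intro!: SUP_mono)
    have 3: "\<forall>x\<in>space M. f x \<notin> space N \<longrightarrow> (SUP i. \<phi> i x) = 0"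
      using p(3) by auto
    show ?case using 1 2 3 p(1) by (intro bexI[of _ "\<lambda>x. SUP i. \<phi> i x"]) auto
  qed
  then obtain \<phi> where p: "\<phi>\<in>borel_measurable M" "\<forall>x\<in>space M. f x \<in> space N \<longrightarrow> \<phi> x \<le> F (f x)"
      "\<forall>x\<in>space M. f x \<notin> space N \<longrightarrow> \<phi> x = 0" "(\<integral>\<^sup>+y. F y \<partial>?\<nu>) \<le> (\<integral>\<^sup>+x. \<phi> x \<partial>M)"
    by blast
  have "(\<integral>\<^sup>+x. \<phi> x \<partial>M) \<le> (\<integral>\<^sup>+x. F (f x) \<partial>M)"
    using p(2,3) by (intro nn_integral_mono) (metis zero_le)
  then show ?thesis using p(4) by simp
qed

lemma nn_integral_bind_le:
  fixes g :: "'b \<Rightarrow> ennreal"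
  assumes M: "space M \<noteq> {}" and N: "\<And>x. x \<in> space M \<Longrightarrow> sets (N x) = sets R"
    and g: "g \<in> borel_measurable R"
  shows "(\<integral>\<^sup>+y. g y \<partial>(M \<bind> N)) \<le> (\<integral>\<^sup>+x. (\<integral>\<^sup>+y. g y \<partial>N x) \<partial>M)"
proof -
  have s: "sets (N (SOME x. x \<in> space M)) = sets R"
    using N M by (simp add: some_in_eq)
  have "(\<integral>\<^sup>+y. g y \<partial>(M \<bind> N)) = (\<integral>\<^sup>+y. g y \<partial>join (distr M (subprob_algebra R) N))"
    using M by (simp add: bind_def subprob_algebra_cong[OF s])
  also have "\<dots> = (\<integral>\<^sup>+M'. (\<integral>\<^sup>+y. g y \<partial>M') \<partial>distr M (subprob_algebra R) N)"
    using g by (intro nn_integral_join) auto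
  also have "\<dots> \<le> (\<integral>\<^sup>+x. (\<integral>\<^sup>+y. g y \<partial>N x) \<partial>M)"
    using g by (intro nn_integral_distr_le nn_integral_measurable_subprob_algebra)
  finally show ?thesis .
qed


lemma ftc_left:
  fixes \<phi> \<phi>' :: "real \<Rightarrow> real"
  assumes ab: "a < b"
    and der: "\<And>z. a \<le> z \<Longrightarrow> z < b \<Longrightarrow> (\<phi> has_real_derivative \<phi>' z) (at z)"
    and lim: "(\<phi> \<longlongrightarrow> A) (at_left b)"
    and int: "set_integrable lborel {a..<b} \<phi>'"
  shows "(LINT z:{a..<b}|lborel. \<phi>' z) = A - \<phi> a"
proof -
  define t where "t n = b - (b - a) / (real n + 2)" for n :: nat
  have t_lt: "t n < b" for n using ab by (auto simp: t_def)
  have t_ge: "a \<le> t n" for n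
  proof -
    have "a * real n \<le> b * real n" using ab by (intro mult_right_mono) auto
    then have "(b - a) / (real n + 2) \<le> (b - a)" using ab by (auto simp: field_simps)
    then show ?thesis by (auto simp: t_def)
  qed
  have t_lim: "t \<longlonglongrightarrow> b"
  proof -
    have "(\<lambda>n. (b - a) / (real n + 2)) \<longlonglongrightarrow> 0"
      by real_asymp
    then have "(\<lambda>n. b - (b - a) / (real n + 2)) \<longlonglongrightarrow> b - 0"
      by (intro tendsto_intros)
    moreover have "t = (\<lambda>n. b - (b - a) / (real n + 2))" by (auto simp: t_def fun_eq_iff)
    ultimately show ?thesis by simp
  qed
  have t_left: "filterlim t (at_left b) sequentially"
    using t_lim t_lt by (intro tendsto_imp_filterlim_at_left) auto
  have eqn: "(LINT z:{a..t n}|lborel. \<phi>' z) = \<phi> (t n) - \<phi> a" for n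
  proof -
    have si: "set_integrable lborel {a..t n} \<phi>'"
      by (rule set_integrable_subset[OF int]) (use t_lt[of n] in auto)
    have "(\<phi>' has_integral (\<phi> (t n) - \<phi> a)) {a..t n}"
    proof (rule fundamental_theorem_of_calculus)
      show "a \<le> t n" by (rule t_ge)
      fix z assume "z \<in> {a..t n}"
      then have "(\<phi> has_real_derivative \<phi>' z) (at z)" using t_lt[of n] by (intro der) auto
      then show "(\<phi> has_vector_derivative \<phi>' z) (at z within {a..t n})"
        by (simp add: has_real_derivative_iff_has_vector_derivative[symmetric] has_field_derivative_at_within)
    qed
    then show ?thesis using set_borel_integral_eq_integral(2)[OF si] by (simp add: integral_unique)
  qed
  have conv: "(\<lambda>n. LINT z:{a..t n}|lborel. \<phi>' z) \<longlonglongrightarrow> (LINT z:{a..<b}|lborel. \<phi>' z)"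
    unfolding set_lebesgue_integral_def
  proof (rule integral_dominated_convergence[where w="\<lambda>z. norm (indicator {a..<b} z *\<^sub>R \<phi>' z)"])
    show "(\<lambda>z. indicator {a..<b} z *\<^sub>R \<phi>' z) \<in> borel_measurable lborel"
      using int unfolding set_integrable_def by auto
    show "(\<lambda>z. indicator {a..t n} z *\<^sub>R \<phi>' z) \<in> borel_measurable lborel" for n
    proof -
      have "{a..t n} \<subseteq> {a..<b}" using t_lt[of n] by auto
      then have "set_integrable lborel {a..t n} \<phi>'" by (intro set_integrable_subset[OF int]) auto
      then show ?thesis unfolding set_integrable_def by (rule borel_measurable_integrable)
    qed
    show "integrable lborel (\<lambda>z. norm (indicator {a..<b} z *\<^sub>R \<phi>' z))"
      using int unfolding set_integrable_def by auto
    show "AE z in lborel. (\<lambda>n. indicator {a..t n} z *\<^sub>R \<phi>' z) \<longlonglongrightarrow> indicator {a..<b} z *\<^sub>R \<phi>' z"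
    proof (rule AE_I2)
      fix z
      show "(\<lambda>n. indicator {a..t n} z *\<^sub>R \<phi>' z) \<longlonglongrightarrow> indicator {a..<b} z *\<^sub>R \<phi>' z"
      proof (cases "a \<le> z \<and> z < b")
        case True
        then have "eventually (\<lambda>n. z \<le> t n) sequentially"
        proof -
          have "\<forall>\<^sub>F n in sequentially. z < t n" using t_lim True by (auto simp: order_tendsto_iff)
          then show ?thesis by eventually_elim auto
        qed
        then have "eventually (\<lambda>n. indicator {a..t n} z *\<^sub>R \<phi>' z = indicator {a..<b} z *\<^sub>R \<phi>' z) sequentially"
          by eventually_elim (use True in auto)
        then show ?thesis by (rule tendsto_eventually)
      next
        case False
        then have "indicator {a..t n} z *\<^sub>R \<phi>' z = indicator {a..<b} z *\<^sub>R \<phi>' z" for n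
          using t_lt[of n] by (auto simp: indicator_def)
        then show ?thesis by (simp only:) (rule tendsto_const)
      qed
    qed
    show "AE z in lborel. norm (indicator {a..t n} z *\<^sub>R \<phi>' z) \<le> norm (indicator {a..<b} z *\<^sub>R \<phi>' z)" for n
      using t_lt[of n] by (auto simp: indicator_def)
  qed
  have "(\<lambda>n. \<phi> (t n) - \<phi> a) \<longlonglongrightarrow> A - \<phi> a"
    using filterlim_compose[OF lim t_left] by (intro tendsto_intros)
  then have "(\<lambda>n. LINT z:{a..t n}|lborel. \<phi>' z) \<longlonglongrightarrow> A - \<phi> a" using eqn by simp
  then show ?thesis using conv LIMSEQ_unique by blast
qed

lemma ftc_right:
  fixes \<phi> \<phi>' :: "real \<Rightarrow> real"
  assumes ab: "a < b"
    and der: "\<And>z. a < z \<Longrightarrow> z \<le> b \<Longrightarrow> (\<phi> has_real_derivative \<phi>' z) (at z)"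
    and lim: "(\<phi> \<longlongrightarrow> A) (at_right a)"
    and int: "set_integrable lborel {a<..b} \<phi>'"
  shows "(LINT z:{a<..b}|lborel. \<phi>' z) = \<phi> b - A"
proof -
  define t where "t n = a + (b - a) / (real n + 2)" for n :: nat
  have t_gt: "a < t n" for n using ab by (auto simp: t_def)
  have t_le: "t n \<le> b" for n
  proof -
    have "a * real n \<le> b * real n" using ab by (intro mult_right_mono) auto
    then have "(b - a) / (real n + 2) \<le> (b - a)" using ab by (auto simp: field_simps)
    then show ?thesis by (auto simp: t_def)
  qed
  have t_lim: "t \<longlonglongrightarrow> a"
  proof -
    have "(\<lambda>n. (b - a) / (real n + 2)) \<longlonglongrightarrow> 0"
      by real_asymp
    then have "(\<lambda>n. a + (b - a) / (real n + 2)) \<longlonglongrightarrow> a + 0"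
      by (intro tendsto_intros)
    moreover have "t = (\<lambda>n. a + (b - a) / (real n + 2))" by (auto simp: t_def fun_eq_iff)
    ultimately show ?thesis by simp
  qed
  have t_right: "filterlim t (at_right a) sequentially"
    using t_lim t_gt by (intro tendsto_imp_filterlim_at_right) auto
  have eqn: "(LINT z:{t n..b}|lborel. \<phi>' z) = \<phi> b - \<phi> (t n)" for n
  proof -
    have si: "set_integrable lborel {t n..b} \<phi>'"
      by (rule set_integrable_subset[OF int]) (use t_gt[of n] in auto)
    have "(\<phi>' has_integral (\<phi> b - \<phi> (t n))) {t n..b}"
    proof (rule fundamental_theorem_of_calculus)
      show "t n \<le> b" by (rule t_le)
      fix z assume "z \<in> {t n..b}"
      then have "(\<phi> has_real_derivative \<phi>' z) (at z)" using t_gt[of n] by (intro der) auto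
      then show "(\<phi> has_vector_derivative \<phi>' z) (at z within {t n..b})"
        by (simp add: has_real_derivative_iff_has_vector_derivative[symmetric] has_field_derivative_at_within)
    qed
    then show ?thesis using set_borel_integral_eq_integral(2)[OF si] by (simp add: integral_unique)
  qed
  have conv: "(\<lambda>n. LINT z:{t n..b}|lborel. \<phi>' z) \<longlonglongrightarrow> (LINT z:{a<..b}|lborel. \<phi>' z)"
    unfolding set_lebesgue_integral_def
  proof (rule integral_dominated_convergence[where w="\<lambda>z. norm (indicator {a<..b} z *\<^sub>R \<phi>' z)"])
    show "(\<lambda>z. indicator {a<..b} z *\<^sub>R \<phi>' z) \<in> borel_measurable lborel"
      using int unfolding set_integrable_def by auto
    show "(\<lambda>z. indicator {t n..b} z *\<^sub>R \<phi>' z) \<in> borel_measurable lborel" for n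
    proof -
      have "{t n..b} \<subseteq> {a<..b}" using t_gt[of n] by auto
      then have "set_integrable lborel {t n..b} \<phi>'" by (intro set_integrable_subset[OF int]) auto
      then show ?thesis unfolding set_integrable_def by (rule borel_measurable_integrable)
    qed
    show "integrable lborel (\<lambda>z. norm (indicator {a<..b} z *\<^sub>R \<phi>' z))"
      using int unfolding set_integrable_def by auto
    show "AE z in lborel. (\<lambda>n. indicator {t n..b} z *\<^sub>R \<phi>' z) \<longlonglongrightarrow> indicator {a<..b} z *\<^sub>R \<phi>' z"
    proof (rule AE_I2)
      fix z
      show "(\<lambda>n. indicator {t n..b} z *\<^sub>R \<phi>' z) \<longlonglongrightarrow> indicator {a<..b} z *\<^sub>R \<phi>' z"
      proof (cases "a < z \<and> z \<le> b")
        case True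
        then have "eventually (\<lambda>n. t n \<le> z) sequentially"
        proof -
          have "\<forall>\<^sub>F n in sequentially. t n < z" using t_lim True by (auto simp: order_tendsto_iff)
          then show ?thesis by eventually_elim auto
        qed
        then have "eventually (\<lambda>n. indicator {t n..b} z *\<^sub>R \<phi>' z = indicator {a<..b} z *\<^sub>R \<phi>' z) sequentially"
          by eventually_elim (use True in auto)
        then show ?thesis by (rule tendsto_eventually)
      next
        case False
        then have "indicator {t n..b} z *\<^sub>R \<phi>' z = indicator {a<..b} z *\<^sub>R \<phi>' z" for n
          using t_gt[of n] by (auto simp: indicator_def)
        then show ?thesis by (simp only:) (rule tendsto_const)
      qed
    qed
    show "AE z in lborel. norm (indicator {t n..b} z *\<^sub>R \<phi>' z) \<le> norm (indicator {a<..b} z *\<^sub>R \<phi>' z)" for n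
      using t_gt[of n] by (auto simp: indicator_def)
  qed
  have "(\<lambda>n. \<phi> b - \<phi> (t n)) \<longlonglongrightarrow> \<phi> b - A"
    using filterlim_compose[OF lim t_right] by (intro tendsto_intros)
  then have "(\<lambda>n. LINT z:{t n..b}|lborel. \<phi>' z) \<longlonglongrightarrow> \<phi> b - A" using eqn by simp
  then show ?thesis using conv LIMSEQ_unique by blast
qed


lemma J_set_integrable:
  fixes w \<phi>' :: "real \<Rightarrow> real"
  assumes w_meas: "w \<in> borel_measurable borel" and w_nn: "\<And>z. 0 \<le> w z"
    and A: "A \<in> sets borel"
    and \<phi>'_meas: "\<phi>' \<in> borel_measurable borel"
    and J: "(\<integral>\<^sup>+z. indicator A z * ennreal (\<phi>' z ^ 2 / w z) \<partial>lborel) = ennreal J" and J0: "0 \<le> J"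
  shows "set_integrable lborel A (\<lambda>z. \<phi>' z ^ 2 / w z)"
    and "(LINT z:A|lborel. \<phi>' z ^ 2 / w z) = J"
proof -
  have eq: "ennreal (norm (indicator A z *\<^sub>R (\<phi>' z ^ 2 / w z))) = indicator A z * ennreal (\<phi>' z ^ 2 / w z)" for z
    using w_nn[of z] by (auto simp: indicator_def)
  have eq2: "ennreal (indicator A z *\<^sub>R (\<phi>' z ^ 2 / w z)) = indicator A z * ennreal (\<phi>' z ^ 2 / w z)" for z
    using w_nn[of z] by (auto simp: indicator_def)
  have N: "(\<integral>\<^sup>+z. ennreal (norm (indicator A z *\<^sub>R (\<phi>' z ^ 2 / w z))) \<partial>lborel) = ennreal J"
    by (simp only: eq J)
  show si: "set_integrable lborel A (\<lambda>z. \<phi>' z ^ 2 / w z)"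
    unfolding set_integrable_def
    by (rule integrableI_bounded) (use w_meas \<phi>'_meas A N in auto)
  have "(LINT z:A|lborel. \<phi>' z ^ 2 / w z) = enn2real (\<integral>\<^sup>+z. ennreal (indicator A z *\<^sub>R (\<phi>' z ^ 2 / w z)) \<partial>lborel)"
    unfolding set_lebesgue_integral_def using si w_nn unfolding set_integrable_def
    by (intro integral_eq_nn_integral) (auto simp: indicator_def)
  also have "\<dots> = J" by (simp only: eq2 J) (use J0 in simp)
  finally show "(LINT z:A|lborel. \<phi>' z ^ 2 / w z) = J" .
qed

lemma amgm: fixes a w :: real assumes "0 < w" shows "\<bar>a\<bar> \<le> a ^ 2 / w + w"
proof -
  have "0 \<le> (\<bar>a\<bar> - w)^2" by simp
  then have "2 * (\<bar>a\<bar> * w) \<le> a^2 + w * w" by (simp add: power2_eq_square algebra_simps)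
  moreover have "0 \<le> \<bar>a\<bar> * w" using assms by simp
  ultimately have "\<bar>a\<bar> * w \<le> a^2 + w * w" by linarith
  then show ?thesis using assms by (simp add: field_simps)
qed

lemma phi_set_integrable:
  fixes w \<phi>' :: "real \<Rightarrow> real"
  assumes w_meas: "w \<in> borel_measurable borel" and w_nn: "\<And>z. 0 \<le> w z"
    and w_int: "(\<integral>\<^sup>+z. ennreal (w z) \<partial>lborel) = 1"
    and A: "A \<in> sets borel" and w_pos: "\<And>z. z \<in> A \<Longrightarrow> 0 < w z"
    and \<phi>'_meas: "\<phi>' \<in> borel_measurable borel"
    and J: "set_integrable lborel A (\<lambda>z. \<phi>' z ^ 2 / w z)"
  shows "set_integrable lborel A \<phi>'"
proof -
  have wi: "integrable lborel w"
    by (rule integrableI_bounded) (use w_meas w_nn w_int in auto)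
  have bi: "integrable lborel (\<lambda>z. indicator A z *\<^sub>R (\<phi>' z ^ 2 / w z) + w z)"
    using J wi unfolding set_integrable_def by auto
  show ?thesis unfolding set_integrable_def
  proof (rule Bochner_Integration.integrable_bound[OF bi])
    show "(\<lambda>z. indicator A z *\<^sub>R \<phi>' z) \<in> borel_measurable lborel" using \<phi>'_meas A by auto
    show "AE z in lborel. norm (indicator A z *\<^sub>R \<phi>' z) \<le> norm (indicator A z *\<^sub>R (\<phi>' z ^ 2 / w z) + w z)"
    proof (rule AE_I2)
      fix z
      show "norm (indicator A z *\<^sub>R \<phi>' z) \<le> norm (indicator A z *\<^sub>R (\<phi>' z ^ 2 / w z) + w z)"
      proof (cases "z \<in> A")
        case True
        then have wp: "0 < w z" by (rule w_pos)
        have "\<bar>\<phi>' z\<bar> \<le> \<phi>' z ^ 2 / w z + w z" by (rule amgm[OF wp])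
        moreover have "0 \<le> \<phi>' z ^ 2 / w z + w z" using wp by simp
        ultimately show ?thesis using True by simp
      next
        case False
        then show ?thesis using w_nn[of z] by simp
      qed
    qed
  qed
qed

lemma inner_bound:
  fixes w \<phi>' P :: "real \<Rightarrow> real" and A :: "real set" and \<alpha> \<beta> \<gamma> c \<sigma> J :: real
  assumes w_meas: "w \<in> borel_measurable borel" and w_nn: "\<And>z. 0 \<le> w z"
    and w_int: "(\<integral>\<^sup>+z. ennreal (w z) \<partial>lborel) = 1"
    and A: "A \<in> sets borel" and w_pos: "\<And>z. z \<in> A \<Longrightarrow> 0 < w z"
    and \<phi>'_meas: "\<phi>' \<in> borel_measurable borel"
    and J: "(\<integral>\<^sup>+z. indicator A z * ennreal (\<phi>' z ^ 2 / w z) \<partial>lborel) = ennreal J" and J0: "0 \<le> J"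
    and \<sigma>: "\<sigma>^2 = 1" and \<gamma>: "0 \<le> \<gamma>"
    and P_meas: "P \<in> borel_measurable borel" and P_nn: "\<And>v. 0 \<le> P v"
    and P_le: "\<And>v. P v \<le> \<alpha> + \<beta> * v + \<gamma> * v^2"
  defines "I \<equiv> LINT z:A|lborel. \<phi>' z"
  shows "0 \<le> \<alpha> + \<beta> * (c + \<sigma> * I) + \<gamma> * ((c + \<sigma> * I)^2 + J)"
    and "(\<integral>\<^sup>+z. ennreal (w z) * ennreal (P (if z \<in> A then c + \<sigma> * \<phi>' z / w z else c)) \<partial>lborel)
           \<le> ennreal (\<alpha> + \<beta> * (c + \<sigma> * I) + \<gamma> * ((c + \<sigma> * I)^2 + J))"
proof -
  define g where "g z = (if z \<in> A then c + \<sigma> * \<phi>' z / w z else c)" for z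
  define s where "s = \<alpha> + \<beta> * (c + \<sigma> * I) + \<gamma> * ((c + \<sigma> * I)^2 + J)"
  have wi: "integrable lborel w"
    by (rule integrableI_bounded) (use w_meas w_nn w_int in auto)
  have w1: "integral\<^sup>L lborel w = 1"
  proof -
    have "integral\<^sup>L lborel w = enn2real (\<integral>\<^sup>+z. ennreal (w z) \<partial>lborel)"
      using wi w_nn by (intro integral_eq_nn_integral) auto
    then show ?thesis using w_int by simp
  qed
  have si2: "set_integrable lborel A (\<lambda>z. \<phi>' z ^ 2 / w z)" and li2: "(LINT z:A|lborel. \<phi>' z ^ 2 / w z) = J"
    using J_set_integrable[OF w_meas w_nn A \<phi>'_meas J J0] by auto
  have si1: "set_integrable lborel A \<phi>'"
    by (rule phi_set_integrable[OF w_meas w_nn w_int A w_pos \<phi>'_meas si2])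
  define R where "R z = w z * (\<alpha> + \<beta> * c + \<gamma> * c^2) + indicator A z * (\<sigma> * (\<beta> + 2 * \<gamma> * c) * \<phi>' z + \<gamma> * (\<phi>' z ^ 2 / w z))" for z
  have eqR: "w z * (\<alpha> + \<beta> * g z + \<gamma> * (g z)^2) = R z" for z
  proof (cases "z \<in> A")
    case True
    then have wp: "0 < w z" by (rule w_pos)
    have "w z * (\<alpha> + \<beta> * (c + \<sigma> * \<phi>' z / w z) + \<gamma> * (c + \<sigma> * \<phi>' z / w z)^2)
        = w z * (\<alpha> + \<beta> * c + \<gamma> * c^2) + (\<sigma> * (\<beta> + 2 * \<gamma> * c) * \<phi>' z + \<gamma> * (\<sigma>^2 * \<phi>' z ^ 2 / w z))"
      using wp by (simp add: field_simps power2_eq_square)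
    then show ?thesis using True \<sigma> by (simp add: g_def R_def)
  next
    case False
    then show ?thesis by (simp add: g_def R_def)
  qed
  have si3: "set_integrable lborel A (\<lambda>z. \<sigma> * (\<beta> + 2 * \<gamma> * c) * \<phi>' z + \<gamma> * (\<phi>' z ^ 2 / w z))"
    using si1 si2 by (intro set_integral_add(1) set_integrable_mult_right) auto
  have Ri: "integrable lborel R"
    unfolding R_def[abs_def] using wi si3 unfolding set_integrable_def by auto
  have intR: "integral\<^sup>L lborel R = (\<alpha> + \<beta> * c + \<gamma> * c^2) + \<sigma> * (\<beta> + 2 * \<gamma> * c) * I + \<gamma> * J"
  proof -
    have "integral\<^sup>L lborel R = integral\<^sup>L lborel (\<lambda>z. w z * (\<alpha> + \<beta> * c + \<gamma> * c^2))
        + (LINT z:A|lborel. \<sigma> * (\<beta> + 2 * \<gamma> * c) * \<phi>' z + \<gamma> * (\<phi>' z ^ 2 / w z))"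
      unfolding R_def[abs_def] set_lebesgue_integral_def using wi si3 unfolding set_integrable_def
      by (subst Bochner_Integration.integral_add) auto
    also have "(LINT z:A|lborel. \<sigma> * (\<beta> + 2 * \<gamma> * c) * \<phi>' z + \<gamma> * (\<phi>' z ^ 2 / w z))
        = \<sigma> * (\<beta> + 2 * \<gamma> * c) * I + \<gamma> * J"
    proof -
      have a: "set_integrable lborel A (\<lambda>z. \<sigma> * (\<beta> + 2 * \<gamma> * c) * \<phi>' z)"
        using si1 by (rule set_integrable_mult_right[where a="\<sigma> * (\<beta> + 2 * \<gamma> * c)"])
      have b: "set_integrable lborel A (\<lambda>z. \<gamma> * (\<phi>' z ^ 2 / w z))"
        using si2 by (rule set_integrable_mult_right[where a="\<gamma>"])
      show ?thesis
        unfolding set_integral_add(2)[OF a b] set_integral_mult_right li2 I_def ..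
    qed
    finally show ?thesis using w1 by simp
  qed
  define Q where "Q z = w z * P (g z)" for z
  have g_meas: "g \<in> borel_measurable borel"
    unfolding g_def[abs_def] using A w_meas \<phi>'_meas by measurable
  have Q_meas: "Q \<in> borel_measurable lborel"
    unfolding Q_def[abs_def] using w_meas P_meas g_meas by measurable
  have Q_nn: "0 \<le> Q z" for z using w_nn P_nn by (simp add: Q_def)
  have Q_le: "Q z \<le> R z" for z
  proof -
    have "Q z \<le> w z * (\<alpha> + \<beta> * g z + \<gamma> * (g z)^2)"
      unfolding Q_def using w_nn P_le by (intro mult_left_mono) auto
    then show ?thesis using eqR by simp
  qed
  have Qi: "integrable lborel Q"
    by (rule Bochner_Integration.integrable_bound[OF Ri Q_meas]) (use Q_nn Q_le in \<open>auto intro!: AE_I2 order_trans[OF Q_le] abs_ge_self\<close>)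
  have "integral\<^sup>L lborel Q \<le> integral\<^sup>L lborel R"
    using Qi Ri Q_le by (intro integral_mono) auto
  moreover have "integral\<^sup>L lborel R \<le> s"
  proof -
    have "s - integral\<^sup>L lborel R = \<gamma> * (\<sigma>^2 * I^2)"
      unfolding intR s_def by (simp add: power2_eq_square algebra_simps)
    moreover have "0 \<le> \<gamma> * (\<sigma>^2 * I^2)" using \<gamma> by simp
    ultimately show ?thesis by linarith
  qed
  moreover have "0 \<le> integral\<^sup>L lborel Q" using Q_nn by simp
  ultimately have Qs: "integral\<^sup>L lborel Q \<le> s" and s0: "0 \<le> s" by linarith+
  show "0 \<le> \<alpha> + \<beta> * (c + \<sigma> * I) + \<gamma> * ((c + \<sigma> * I)^2 + J)" using s0 by (simp add: s_def)
  have "(\<integral>\<^sup>+z. ennreal (w z) * ennreal (P (if z \<in> A then c + \<sigma> * \<phi>' z / w z else c)) \<partial>lborel)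
      = (\<integral>\<^sup>+z. ennreal (Q z) \<partial>lborel)"
    using w_nn P_nn by (intro nn_integral_cong) (simp add: Q_def g_def ennreal_mult)
  also have "\<dots> = ennreal (integral\<^sup>L lborel Q)"
    using Qi Q_nn by (intro nn_integral_eq_integral) auto
  also have "\<dots> \<le> ennreal s" using Qs by (rule ennreal_leI)
  finally show "(\<integral>\<^sup>+z. ennreal (w z) * ennreal (P (if z \<in> A then c + \<sigma> * \<phi>' z / w z else c)) \<partial>lborel)
           \<le> ennreal (\<alpha> + \<beta> * (c + \<sigma> * I) + \<gamma> * ((c + \<sigma> * I)^2 + J))" by (simp add: s_def)
qed


lemma deriv_measurable:
  fixes f f' :: "real \<Rightarrow> real"
  assumes f: "f \<in> borel_measurable borel"
    and d: "\<And>z. z \<noteq> x \<Longrightarrow> (f has_real_derivative f' z) (at z)"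
  shows "f' \<in> borel_measurable borel"
proof -
  define u where "u i z = (if z = x then f' x else (f (z + 1 / Suc i) - f z) * Suc i)" for i :: nat and z
  show ?thesis
  proof (rule borel_measurable_LIMSEQ_real[where u=u])
    fix z :: real
    show "(\<lambda>i. u i z) \<longlonglongrightarrow> f' z"
    proof (cases "z = x")
      case True then show ?thesis by (simp add: u_def)
    next
      case False
      have "((\<lambda>h. (f (z + h) - f z) / h) \<longlongrightarrow> f' z) (at 0)"
        using d[OF False] by (simp add: DERIV_def)
      moreover have "filterlim (\<lambda>i::nat. 1 / real (Suc i)) (at 0) sequentially"
        by (rule filterlim_atI) (auto intro!: LIMSEQ_inverse_real_of_nat[unfolded inverse_eq_divide] simp del: of_nat_Suc)
      ultimately have "(\<lambda>i. (f (z + 1 / real (Suc i)) - f z) / (1 / real (Suc i))) \<longlonglongrightarrow> f' z"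
        by (rule filterlim_compose)
      then show ?thesis using False by (simp add: u_def)
    qed
  next
    fix i
    show "u i \<in> borel_measurable borel"
      unfolding u_def[abs_def] using f by measurable
  qed
qed

lemma AE_supp:
  assumes D: "prob_space D" and Ds: "sets D = sets borel"
  shows "AE \<xi> in D. \<xi> \<in> supp_meas D"
proof -
  interpret prob_space D by (rule D)
  define F where "F = {S. \<exists>x e. e > 0 \<and> S = {x-e<..<x+e} \<and> measure D {x-e<..<x+e} = 0}"
  obtain F' where F': "F' \<subseteq> F" "countable F'" "\<Union>F' = \<Union>F"
  proof (rule Lindelof[of F])
    show "open S" if "S \<in> F" for S using that by (auto simp: F_def)
  qed blast
  have "\<forall>S\<in>F'. AE \<xi> in D. \<xi> \<notin> S"
  proof
    fix S assume "S \<in> F'"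
    then obtain x e where S: "S = {x-e<..<x+e}" "measure D {x-e<..<x+e} = 0" using F' by (auto simp: F_def)
    have "S \<in> sets D" using Ds S by auto
    moreover have "emeasure D S = 0" using S by (simp add: emeasure_eq_measure)
    ultimately show "AE \<xi> in D. \<xi> \<notin> S" by (intro AE_not_in) auto
  qed
  then have "AE \<xi> in D. \<forall>S\<in>F'. \<xi> \<notin> S" by (subst AE_ball_countable[OF F'(2)])
  then show ?thesis
  proof (rule AE_mp, intro AE_I2 impI)
    fix \<xi> assume h: "\<forall>S\<in>F'. \<xi> \<notin> S"
    show "\<xi> \<in> supp_meas D"
    proof (rule ccontr)
      assume "\<xi> \<notin> supp_meas D"
      then obtain e where e: "e > 0" "\<not> 0 < measure D {\<xi>-e<..<\<xi>+e}" by (auto simp: supp_meas_def)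
      then have "measure D {\<xi>-e<..<\<xi>+e} = 0" using measure_nonneg[of D "{\<xi>-e<..<\<xi>+e}"] by linarith
      then have "{\<xi>-e<..<\<xi>+e} \<in> F" using e by (auto simp: F_def)
      moreover have "\<xi> \<in> {\<xi>-e<..<\<xi>+e}" using e by auto
      ultimately have "\<xi> \<in> \<Union>F'" using F'(3) by blast
      then show False using h by auto
    qed
  qed
qed


lemma proj_props:
  fixes l u :: ereal and y v :: real
  assumes lu: "l \<le> u" and ne: "s \<in> feas l u"
  shows "proj l u y \<in> feas l u"
    and "y \<in> feas l u \<Longrightarrow> proj l u y = y"
    and "v \<in> feas l u \<Longrightarrow> (v - proj l u y) * (y - proj l u y) \<le> 0"
proof -
  have ls: "l \<le> ereal s" and su: "ereal s \<le> u" using ne by (auto simp: feas_def)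
  then have lfin: "l \<noteq> \<infinity>" and ufin: "u \<noteq> -\<infinity>" by auto
  consider (mid) "l \<le> ereal y" "ereal y \<le> u" | (lo) "ereal y < l" | (hi) "u < ereal y"
    using not_le by blast
  then have "proj l u y \<in> feas l u \<and> (y \<in> feas l u \<longrightarrow> proj l u y = y) \<and>
     (v \<in> feas l u \<longrightarrow> (v - proj l u y) * (y - proj l u y) \<le> 0)"
  proof cases
    case mid
    then have "max l (min u (ereal y)) = ereal y" by (simp add: min_absorb2 max_absorb2)
    then have "proj l u y = y" by (simp add: proj_def)
    then show ?thesis using mid by (simp add: feas_def)
  next
    case lo
    then have "min u (ereal y) = ereal y" using lu by (simp add: min_absorb2)
    moreover have "max l (ereal y) = l" using lo by (simp add: max_absorb1)
    ultimately have p: "proj l u y = real_of_ereal l" by (simp add: proj_def)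
    have lr: "ereal (real_of_ereal l) = l" using lfin lo by (cases l) auto
    show ?thesis
    proof (intro conjI impI)
      show "proj l u y \<in> feas l u" using p lr lu by (simp add: feas_def)
      show "y \<in> feas l u \<Longrightarrow> proj l u y = y" using lo by (metis feas_def mem_Collect_eq leD)
      assume "v \<in> feas l u"
      then have "l \<le> ereal v" by (simp add: feas_def)
      then have "ereal (real_of_ereal l) \<le> ereal v" using lr by simp
      then have "real_of_ereal l \<le> v" by simp
      moreover have "ereal y < ereal (real_of_ereal l)" using lo lr by simp
      then have "y < real_of_ereal l" by simp
      ultimately show "(v - proj l u y) * (y - proj l u y) \<le> 0" using p
        by (simp add: mult_nonneg_nonpos)
    qed
  next
    case hi
    then have "min u (ereal y) = u" by (simp add: min_absorb1)
    moreover have "max l u = u" using lu by (simp add: max_absorb2)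
    ultimately have p: "proj l u y = real_of_ereal u" by (simp add: proj_def)
    have ur: "ereal (real_of_ereal u) = u" using ufin hi by (cases u) auto
    show ?thesis
    proof (intro conjI impI)
      show "proj l u y \<in> feas l u" using p ur lu by (simp add: feas_def)
      show "y \<in> feas l u \<Longrightarrow> proj l u y = y" using hi by (metis feas_def mem_Collect_eq leD)
      assume "v \<in> feas l u"
      then have "ereal v \<le> u" by (simp add: feas_def)
      then have "ereal v \<le> ereal (real_of_ereal u)" using ur by simp
      then have "v \<le> real_of_ereal u" by simp
      moreover have "ereal (real_of_ereal u) < ereal y" using hi ur by simp
      then have "real_of_ereal u < y" by simp
      ultimately show "(v - proj l u y) * (y - proj l u y) \<le> 0" using p
        by (simp add: mult_nonpos_nonneg)
    qed
  qed
  then show "proj l u y \<in> feas l u" "y \<in> feas l u \<Longrightarrow> proj l u y = y"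
    "v \<in> feas l u \<Longrightarrow> (v - proj l u y) * (y - proj l u y) \<le> 0" by auto
qed

lemma feas_interval: "a \<in> feas l u \<Longrightarrow> b \<in> feas l u \<Longrightarrow> a \<le> c \<Longrightarrow> c \<le> b \<Longrightarrow> c \<in> feas l u"
proof -
  assume "a \<in> feas l u" "b \<in> feas l u" "a \<le> c" "c \<le> b"
  then have 1: "l \<le> ereal a" "ereal b \<le> u" by (auto simp: feas_def)
  have 2: "ereal a \<le> ereal c" "ereal c \<le> ereal b" using \<open>a \<le> c\<close> \<open>c \<le> b\<close> by simp_all
  have "l \<le> ereal c" by (rule order.trans[OF 1(1) 2(1)])
  moreover have "ereal c \<le> u" by (rule order.trans[OF 2(2) 1(2)])
  ultimately show ?thesis unfolding feas_def by simp
qed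

lemma feas_borel[measurable]: "feas l u \<in> sets borel"
  unfolding feas_def by measurable

lemma proj_measurable[measurable]: "proj l u \<in> borel_measurable borel"
  unfolding proj_def[abs_def] by measurable


locale cba =
  fixes D :: "real measure" and hx hxz fm fp :: "real \<Rightarrow> real \<Rightarrow> real"
    and hm hp H Hd :: "real \<Rightarrow> real" and l u :: ereal and K3 eta :: real
  assumes lu: "l \<le> u"
    and D_prob: "prob_space D" and D_sets[measurable_cong]: "sets D = sets borel"
    and A1: "\<And>x. measure D {x} = 0"
    and A2_hm: "\<And>x. x \<in> feas l u \<Longrightarrow> ((\<lambda>z. hx x z) \<longlongrightarrow> hm x) (at_left x)"
    and A2_hp: "\<And>x. x \<in> feas l u \<Longrightarrow> ((\<lambda>z. hx x z) \<longlongrightarrow> hp x) (at_right x)"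
    and A3: "\<And>x xi. x \<in> feas l u \<Longrightarrow> x \<noteq> xi \<Longrightarrow>
        ((\<lambda>z. hx x z) has_real_derivative hxz x xi) (at xi)"
    and A4_grad: "\<And>x. x \<in> feas l u \<Longrightarrow> integrable D (hx x) \<and> (\<integral>xi. hx x xi \<partial>D) = Hd x"
    and C1_nonneg: "\<And>x z. x \<in> feas l u \<Longrightarrow> fm x z \<ge> 0"
    and C1_meas: "\<And>x. x \<in> feas l u \<Longrightarrow> fm x \<in> borel_measurable borel"
    and C1_zero: "\<And>x z. x \<in> feas l u \<Longrightarrow> z \<ge> x \<Longrightarrow> fm x z = 0"
    and C1_pos: "\<And>x z. x \<in> feas l u \<Longrightarrow> Inf (ereal ` supp_meas D) \<le> ereal z \<Longrightarrow> z < x \<Longrightarrow> fm x z > 0"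
    and C1_int: "\<And>x. x \<in> feas l u \<Longrightarrow> (\<integral>\<^sup>+ z. ennreal (fm x z) \<partial>lborel) = 1"
    and C2_nonneg: "\<And>x z. x \<in> feas l u \<Longrightarrow> fp x z \<ge> 0"
    and C2_meas: "\<And>x. x \<in> feas l u \<Longrightarrow> fp x \<in> borel_measurable borel"
    and C2_zero: "\<And>x z. x \<in> feas l u \<Longrightarrow> z \<le> x \<Longrightarrow> fp x z = 0"
    and C2_pos: "\<And>x z. x \<in> feas l u \<Longrightarrow> ereal z \<le> Sup (ereal ` supp_meas D) \<Longrightarrow> x < z \<Longrightarrow> fp x z > 0"
    and C2_int: "\<And>x. x \<in> feas l u \<Longrightarrow> (\<integral>\<^sup>+ z. ennreal (fp x z) \<partial>lborel) = 1"
    and C3_K: "K3 \<ge> 0"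
    and C3_left: "\<And>x. x \<in> feas l u \<Longrightarrow>
        (\<integral>\<^sup>+ z \<in> {z. Inf (ereal ` supp_meas D) \<le> ereal z \<and> z < x}. ennreal (cdf_of D z * (hxz x z)^2 / fm x z) \<partial>lborel)
          \<le> ennreal K3"
    and C3_right: "\<And>x. x \<in> feas l u \<Longrightarrow>
        (\<integral>\<^sup>+ z \<in> {z. x < z \<and> ereal z \<le> Sup (ereal ` supp_meas D)}. ennreal ((1 - cdf_of D z) * (hxz x z)^2 / fp x z) \<partial>lborel)
          \<le> ennreal K3"
    and eta: "eta > 0"
    and ne: "feas l u \<noteq> {}"
begin

abbreviation "S \<equiv> feas l u"
abbreviation "slo \<equiv> Inf (ereal ` supp_meas D)"
abbreviation "shi \<equiv> Sup (ereal ` supp_meas D)"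
abbreviation "K \<equiv> cba_step D fm fp hm hp hxz eta l u"

definition "Jm x \<xi> = (\<integral>\<^sup>+z. indicator {\<xi>..<x} z * ennreal (hxz x z ^ 2 / fm x z) \<partial>lborel)"
definition "Jp x \<xi> = (\<integral>\<^sup>+z. indicator {x<..\<xi>} z * ennreal (hxz x z ^ 2 / fp x z) \<partial>lborel)"

sublocale prob_space D by (rule D_prob)

lemma space_D[simp]: "space D = UNIV"
  using sets_eq_imp_space_eq[OF D_sets] by simp

lemma proj_S: "proj l u y \<in> S"
  using ne lu proj_props(1) by blast

lemma proj_nonexp: "v \<in> S \<Longrightarrow> (v - proj l u y) * (y - proj l u y) \<le> 0"
  using ne lu proj_props(3) by blast

lemma hx_meas[measurable]: "x \<in> S \<Longrightarrow> hx x \<in> borel_measurable borel"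
  using A4_grad[of x] measurable_cong_sets[OF D_sets refl] by (auto dest: borel_measurable_integrable)

lemma hxz_meas[measurable]: "x \<in> S \<Longrightarrow> hxz x \<in> borel_measurable borel"
  by (rule deriv_measurable[OF hx_meas A3]) auto

lemma AE_slo: "AE \<xi> in D. slo \<le> ereal \<xi> \<and> ereal \<xi> \<le> shi"
  using AE_supp[OF D_prob D_sets] by eventually_elim (auto intro: Inf_lower Sup_upper)

lemma pair_lborel_cong: "sets (M \<Otimes>\<^sub>M lborel) = sets (M \<Otimes>\<^sub>M borel)"
  by (rule sets_pair_measure_cong) auto

lemma Jm_meas[measurable]:
  assumes x: "x \<in> S" shows "Jm x \<in> borel_measurable borel"
proof -
  have [measurable]: "fm x \<in> borel_measurable borel" "hxz x \<in> borel_measurable borel"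
    using x C1_meas hxz_meas by auto
  have "(\<lambda>(\<xi>, z). indicator {\<xi>..<x} z * ennreal (hxz x z ^ 2 / fm x z)) \<in> borel_measurable (borel \<Otimes>\<^sub>M borel)"
    unfolding indicator_def atLeastLessThan_iff by measurable
  then have "(\<lambda>(\<xi>, z). indicator {\<xi>..<x} z * ennreal (hxz x z ^ 2 / fm x z)) \<in> borel_measurable (borel \<Otimes>\<^sub>M lborel)"
    by (simp add: measurable_cong_sets[OF pair_lborel_cong refl])
  then show ?thesis unfolding Jm_def[abs_def] by (rule lborel.borel_measurable_nn_integral)
qed

lemma Jp_meas[measurable]:
  assumes x: "x \<in> S" shows "Jp x \<in> borel_measurable borel"
proof -
  have [measurable]: "fp x \<in> borel_measurable borel" "hxz x \<in> borel_measurable borel"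
    using x C2_meas hxz_meas by auto
  have "(\<lambda>(\<xi>, z). indicator {x<..\<xi>} z * ennreal (hxz x z ^ 2 / fp x z)) \<in> borel_measurable (borel \<Otimes>\<^sub>M borel)"
    unfolding indicator_def greaterThanAtMost_iff by measurable
  then have "(\<lambda>(\<xi>, z). indicator {x<..\<xi>} z * ennreal (hxz x z ^ 2 / fp x z)) \<in> borel_measurable (borel \<Otimes>\<^sub>M lborel)"
    by (simp add: measurable_cong_sets[OF pair_lborel_cong refl])
  then show ?thesis unfolding Jp_def[abs_def] by (rule lborel.borel_measurable_nn_integral)
qed


lemma pair_D_lborel: "pair_sigma_finite D lborel"
  by (simp add: pair_sigma_finite_def lborel.sigma_finite_measure_axioms sigma_finite_measure_axioms)

lemma sets_D_lborel: "sets (D \<Otimes>\<^sub>M lborel) = sets (borel \<Otimes>\<^sub>M borel)"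
  by (rule sets_pair_measure_cong) (auto simp: D_sets)

lemma Jm_int:
  assumes x: "x \<in> S" shows "(\<integral>\<^sup>+\<xi>. indicator {..<x} \<xi> * Jm x \<xi> \<partial>D) \<le> ennreal K3"
proof -
  have [measurable]: "fm x \<in> borel_measurable borel" "hxz x \<in> borel_measurable borel"
    using x C1_meas hxz_meas by auto
  define E where "E z = ennreal (hxz x z ^ 2 / fm x z)" for z
  have [measurable]: "E \<in> borel_measurable borel" unfolding E_def[abs_def] by measurable
  define f where "f \<xi> z = indicator {\<xi>. slo \<le> ereal \<xi>} \<xi> * indicator {..<x} \<xi> * (indicator {\<xi>..<x} z * E z)" for \<xi> z
  have "case_prod f \<in> borel_measurable (borel \<Otimes>\<^sub>M borel)"
    unfolding f_def indicator_def atLeastLessThan_iff lessThan_iff mem_Collect_eq by measurable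
  then have f_meas: "case_prod f \<in> borel_measurable (D \<Otimes>\<^sub>M lborel)"
    by (simp add: measurable_cong_sets[OF sets_D_lborel refl])
  have "(\<integral>\<^sup>+\<xi>. indicator {..<x} \<xi> * Jm x \<xi> \<partial>D) = (\<integral>\<^sup>+\<xi>. \<integral>\<^sup>+z. f \<xi> z \<partial>lborel \<partial>D)"
  proof (rule nn_integral_cong_AE)
    show "AE \<xi> in D. indicator {..<x} \<xi> * Jm x \<xi> = (\<integral>\<^sup>+z. f \<xi> z \<partial>lborel)"
      using AE_slo
    proof eventually_elim
      case (elim \<xi>)
      have "(\<integral>\<^sup>+z. f \<xi> z \<partial>lborel) = indicator {\<xi>. slo \<le> ereal \<xi>} \<xi> * indicator {..<x} \<xi> * (\<integral>\<^sup>+z. indicator {\<xi>..<x} z * E z \<partial>lborel)"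
        unfolding f_def by (intro nn_integral_cmult) auto
      then show ?case using elim by (simp add: Jm_def E_def)
    qed
  qed
  also have "\<dots> = (\<integral>\<^sup>+z. \<integral>\<^sup>+\<xi>. f \<xi> z \<partial>D \<partial>lborel)"
    by (rule pair_sigma_finite.Fubini'[OF pair_D_lborel f_meas, symmetric])
  also have "\<dots> \<le> (\<integral>\<^sup>+z. ennreal (cdf_of D z * (hxz x z)^2 / fm x z) * indicator {z. slo \<le> ereal z \<and> z < x} z \<partial>lborel)"
  proof (rule nn_integral_mono)
    fix z
    define C where "C = indicator {z. slo \<le> ereal z \<and> z < x} z * E z"
    have "(\<integral>\<^sup>+\<xi>. f \<xi> z \<partial>D) \<le> (\<integral>\<^sup>+\<xi>. C * indicator {..z} \<xi> \<partial>D)"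
    proof (rule nn_integral_mono)
      fix \<xi>
      show "f \<xi> z \<le> C * indicator {..z} \<xi>"
      proof (cases "slo \<le> ereal \<xi> \<and> \<xi> \<le> z \<and> z < x")
        case True
        then have "slo \<le> ereal z" using order.trans by (metis ereal_less_eq(3))
        then show ?thesis using True by (simp add: f_def C_def indicator_def)
      next
        case False
        then show ?thesis by (auto simp: f_def C_def indicator_def)
      qed
    qed
    also have "\<dots> = C * emeasure D {..z}" by (rule nn_integral_cmult_indicator) simp
    also have "\<dots> = ennreal (cdf_of D z * (hxz x z)^2 / fm x z) * indicator {z. slo \<le> ereal z \<and> z < x} z"
    proof -
      have "ennreal (cdf_of D z * (hxz x z)^2 / fm x z) = ennreal (cdf_of D z) * E z"
        unfolding E_def times_divide_eq_right[symmetric] using C1_nonneg[OF x, of z]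
        by (intro ennreal_mult) (auto simp: cdf_of_def)
      then show ?thesis by (simp add: C_def cdf_of_def emeasure_eq_measure mult_ac)
    qed
    finally show "(\<integral>\<^sup>+\<xi>. f \<xi> z \<partial>D) \<le> ennreal (cdf_of D z * (hxz x z)^2 / fm x z) * indicator {z. slo \<le> ereal z \<and> z < x} z" .
  qed
  also have "\<dots> \<le> ennreal K3" using C3_left[OF x] by simp
  finally show ?thesis .
qed


lemma singleton_null: "{z} \<in> null_sets D"
  using A1[of z] by (auto simp: null_sets_def emeasure_eq_measure D_sets)

lemma measure_atLeast: "measure D {z..} = 1 - cdf_of D z"
proof -
  have "{z..} = space D - {..<z}" by auto
  then have "measure D {z..} = 1 - measure D {..<z}" using prob_compl[of "{..<z}"] D_sets by simp
  moreover have "measure D {..<z} = measure D {..z}"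
  proof -
    have "{..<z} = {..z} - {z}" by auto
    then show ?thesis using measure_Diff_null_set[OF _ singleton_null, of "{..z}"] D_sets by simp
  qed
  ultimately show ?thesis by (simp add: cdf_of_def)
qed

lemma Jp_int:
  assumes x: "x \<in> S" shows "(\<integral>\<^sup>+\<xi>. indicator {x<..} \<xi> * Jp x \<xi> \<partial>D) \<le> ennreal K3"
proof -
  have [measurable]: "fp x \<in> borel_measurable borel" "hxz x \<in> borel_measurable borel"
    using x C2_meas hxz_meas by auto
  define E where "E z = ennreal (hxz x z ^ 2 / fp x z)" for z
  have [measurable]: "E \<in> borel_measurable borel" unfolding E_def[abs_def] by measurable
  define f where "f \<xi> z = indicator {\<xi>. ereal \<xi> \<le> shi} \<xi> * indicator {x<..} \<xi> * (indicator {x<..\<xi>} z * E z)" for \<xi> z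
  have "case_prod f \<in> borel_measurable (borel \<Otimes>\<^sub>M borel)"
    unfolding f_def indicator_def greaterThanAtMost_iff greaterThan_iff mem_Collect_eq by measurable
  then have f_meas: "case_prod f \<in> borel_measurable (D \<Otimes>\<^sub>M lborel)"
    by (simp add: measurable_cong_sets[OF sets_D_lborel refl])
  have "(\<integral>\<^sup>+\<xi>. indicator {x<..} \<xi> * Jp x \<xi> \<partial>D) = (\<integral>\<^sup>+\<xi>. \<integral>\<^sup>+z. f \<xi> z \<partial>lborel \<partial>D)"
  proof (rule nn_integral_cong_AE)
    show "AE \<xi> in D. indicator {x<..} \<xi> * Jp x \<xi> = (\<integral>\<^sup>+z. f \<xi> z \<partial>lborel)"
      using AE_slo
    proof eventually_elim
      case (elim \<xi>)
      have "(\<integral>\<^sup>+z. f \<xi> z \<partial>lborel) = indicator {\<xi>. ereal \<xi> \<le> shi} \<xi> * indicator {x<..} \<xi> * (\<integral>\<^sup>+z. indicator {x<..\<xi>} z * E z \<partial>lborel)"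
        unfolding f_def by (intro nn_integral_cmult) auto
      then show ?case using elim by (simp add: Jp_def E_def)
    qed
  qed
  also have "\<dots> = (\<integral>\<^sup>+z. \<integral>\<^sup>+\<xi>. f \<xi> z \<partial>D \<partial>lborel)"
    by (rule pair_sigma_finite.Fubini'[OF pair_D_lborel f_meas, symmetric])
  also have "\<dots> \<le> (\<integral>\<^sup>+z. ennreal ((1 - cdf_of D z) * (hxz x z)^2 / fp x z) * indicator {z. x < z \<and> ereal z \<le> shi} z \<partial>lborel)"
  proof (rule nn_integral_mono)
    fix z
    define C where "C = indicator {z. x < z \<and> ereal z \<le> shi} z * E z"
    have "(\<integral>\<^sup>+\<xi>. f \<xi> z \<partial>D) \<le> (\<integral>\<^sup>+\<xi>. C * indicator {z..} \<xi> \<partial>D)"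
    proof (rule nn_integral_mono)
      fix \<xi>
      show "f \<xi> z \<le> C * indicator {z..} \<xi>"
      proof (cases "ereal \<xi> \<le> shi \<and> x < z \<and> z \<le> \<xi>")
        case True
        then have "ereal z \<le> shi" using order.trans by (metis ereal_less_eq(3))
        then show ?thesis using True by (simp add: f_def C_def indicator_def)
      next
        case False
        then show ?thesis by (auto simp: f_def C_def indicator_def)
      qed
    qed
    also have "\<dots> = C * emeasure D {z..}" by (rule nn_integral_cmult_indicator) simp
    also have "\<dots> = ennreal ((1 - cdf_of D z) * (hxz x z)^2 / fp x z) * indicator {z. x < z \<and> ereal z \<le> shi} z"
    proof -
      have "0 \<le> 1 - cdf_of D z" using measure_atLeast[of z] measure_nonneg[of D "{z..}"] by simp
      then have "ennreal ((1 - cdf_of D z) * (hxz x z)^2 / fp x z) = ennreal (1 - cdf_of D z) * E z"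
        unfolding E_def times_divide_eq_right[symmetric] using C2_nonneg[OF x, of z]
        by (intro ennreal_mult) auto
      then show ?thesis by (simp add: C_def emeasure_eq_measure measure_atLeast mult_ac)
    qed
    finally show "(\<integral>\<^sup>+\<xi>. f \<xi> z \<partial>D) \<le> ennreal ((1 - cdf_of D z) * (hxz x z)^2 / fp x z) * indicator {z. x < z \<and> ereal z \<le> shi} z" .
  qed
  also have "\<dots> \<le> ennreal K3" using C3_right[OF x] by simp
  finally show ?thesis .
qed


lemma inner_left:
  fixes P :: "real \<Rightarrow> real"
  assumes x: "x \<in> S" and \<xi>: "\<xi> < x" "slo \<le> ereal \<xi>" and Jfin: "Jm x \<xi> \<noteq> \<infinity>"
    and \<gamma>: "0 \<le> \<gamma>" and P_meas: "P \<in> borel_measurable borel" and P_nn: "\<And>v. 0 \<le> P v"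
    and P_le: "\<And>v. P v \<le> \<alpha> + \<beta> * v + \<gamma> * v^2"
  shows "0 \<le> \<alpha> + \<beta> * hx x \<xi> + \<gamma> * ((hx x \<xi>)^2 + enn2real (Jm x \<xi>))"
    and "(\<integral>\<^sup>+z. ennreal (fm x z) * ennreal (P (grad_minus hm hxz fm x \<xi> z)) \<partial>lborel)
          \<le> ennreal (\<alpha> + \<beta> * hx x \<xi> + \<gamma> * ((hx x \<xi>)^2 + enn2real (Jm x \<xi>)))"
proof -
  define J where "J = enn2real (Jm x \<xi>)"
  have JJ: "Jm x \<xi> = ennreal J" using Jfin by (simp add: J_def ennreal_enn2real_if)
  have J0: "0 \<le> J" by (simp add: J_def)
  have wpos: "0 < fm x z" if "z \<in> {\<xi>..<x}" for z
  proof -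
    have "ereal \<xi> \<le> ereal z" using that by simp
    then have "slo \<le> ereal z" using \<xi>(2) by (rule order.trans[rotated])
    then show ?thesis using C1_pos[OF x] that by auto
  qed
  have A: "{\<xi>..<x} \<in> sets borel" by simp
  have Jeq: "(\<integral>\<^sup>+z. indicator {\<xi>..<x} z * ennreal (hxz x z ^ 2 / fm x z) \<partial>lborel) = ennreal J"
    using JJ by (simp add: Jm_def)
  have si2: "set_integrable lborel {\<xi>..<x} (\<lambda>z. hxz x z ^ 2 / fm x z)"
    by (rule J_set_integrable(1)[OF C1_meas[OF x] C1_nonneg[OF x] A hxz_meas[OF x] Jeq J0])
  have si1: "set_integrable lborel {\<xi>..<x} (hxz x)"
    by (rule phi_set_integrable[OF C1_meas[OF x] C1_nonneg[OF x] C1_int[OF x] A wpos hxz_meas[OF x] si2])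
  have I: "(LINT z:{\<xi>..<x}|lborel. hxz x z) = hm x - hx x \<xi>"
  proof (rule ftc_left[OF \<xi>(1)])
    show "(hx x has_real_derivative hxz x z) (at z)" if "\<xi> \<le> z" "z < x" for z
      using A3[OF x, of z] that by simp
    show "(hx x \<longlongrightarrow> hm x) (at_left x)" using A2_hm[OF x] by simp
    show "set_integrable lborel {\<xi>..<x} (hxz x)" by (rule si1)
  qed
  have g_eq: "grad_minus hm hxz fm x \<xi> z = (if z \<in> {\<xi>..<x} then hm x + (-1) * hxz x z / fm x z else hm x)" for z
    using C1_zero[OF x, of z] by (auto simp: grad_minus_def)
  note ib = inner_bound[OF C1_meas[OF x] C1_nonneg[OF x] C1_int[OF x] A wpos hxz_meas[OF x] Jeq J0 _ \<gamma> P_meas P_nn P_le,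
      of "-1" "hm x"]
  have c: "hm x + (-1) * (LINT z:{\<xi>..<x}|lborel. hxz x z) = hx x \<xi>" using I by simp
  show "0 \<le> \<alpha> + \<beta> * hx x \<xi> + \<gamma> * ((hx x \<xi>)^2 + enn2real (Jm x \<xi>))"
    using ib(1) unfolding c J_def by simp
  show "(\<integral>\<^sup>+z. ennreal (fm x z) * ennreal (P (grad_minus hm hxz fm x \<xi> z)) \<partial>lborel)
          \<le> ennreal (\<alpha> + \<beta> * hx x \<xi> + \<gamma> * ((hx x \<xi>)^2 + enn2real (Jm x \<xi>)))"
    using ib(2) unfolding c J_def g_eq by simp
qed

lemma inner_right:
  fixes P :: "real \<Rightarrow> real"
  assumes x: "x \<in> S" and \<xi>: "x < \<xi>" "ereal \<xi> \<le> shi" and Jfin: "Jp x \<xi> \<noteq> \<infinity>"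
    and \<gamma>: "0 \<le> \<gamma>" and P_meas: "P \<in> borel_measurable borel" and P_nn: "\<And>v. 0 \<le> P v"
    and P_le: "\<And>v. P v \<le> \<alpha> + \<beta> * v + \<gamma> * v^2"
  shows "0 \<le> \<alpha> + \<beta> * hx x \<xi> + \<gamma> * ((hx x \<xi>)^2 + enn2real (Jp x \<xi>))"
    and "(\<integral>\<^sup>+z. ennreal (fp x z) * ennreal (P (grad_plus hp hxz fp x \<xi> z)) \<partial>lborel)
          \<le> ennreal (\<alpha> + \<beta> * hx x \<xi> + \<gamma> * ((hx x \<xi>)^2 + enn2real (Jp x \<xi>)))"
proof -
  define J where "J = enn2real (Jp x \<xi>)"
  have JJ: "Jp x \<xi> = ennreal J" using Jfin by (simp add: J_def ennreal_enn2real_if)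
  have J0: "0 \<le> J" by (simp add: J_def)
  have wpos: "0 < fp x z" if "z \<in> {x<..\<xi>}" for z
  proof -
    have "ereal z \<le> ereal \<xi>" using that by simp
    then have "ereal z \<le> shi" using \<xi>(2) by (rule order.trans)
    then show ?thesis using C2_pos[OF x] that by auto
  qed
  have A: "{x<..\<xi>} \<in> sets borel" by simp
  have Jeq: "(\<integral>\<^sup>+z. indicator {x<..\<xi>} z * ennreal (hxz x z ^ 2 / fp x z) \<partial>lborel) = ennreal J"
    using JJ by (simp add: Jp_def)
  have si2: "set_integrable lborel {x<..\<xi>} (\<lambda>z. hxz x z ^ 2 / fp x z)"
    by (rule J_set_integrable(1)[OF C2_meas[OF x] C2_nonneg[OF x] A hxz_meas[OF x] Jeq J0])
  have si1: "set_integrable lborel {x<..\<xi>} (hxz x)"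
    by (rule phi_set_integrable[OF C2_meas[OF x] C2_nonneg[OF x] C2_int[OF x] A wpos hxz_meas[OF x] si2])
  have I: "(LINT z:{x<..\<xi>}|lborel. hxz x z) = hx x \<xi> - hp x"
  proof (rule ftc_right[OF \<xi>(1)])
    show "(hx x has_real_derivative hxz x z) (at z)" if "x < z" "z \<le> \<xi>" for z
      using A3[OF x, of z] that by simp
    show "(hx x \<longlongrightarrow> hp x) (at_right x)" using A2_hp[OF x] by simp
    show "set_integrable lborel {x<..\<xi>} (hxz x)" by (rule si1)
  qed
  have g_eq: "grad_plus hp hxz fp x \<xi> z = (if z \<in> {x<..\<xi>} then hp x + 1 * hxz x z / fp x z else hp x)" for z
    using C2_zero[OF x, of z] by (auto simp: grad_plus_def)
  note ib = inner_bound[OF C2_meas[OF x] C2_nonneg[OF x] C2_int[OF x] A wpos hxz_meas[OF x] Jeq J0 _ \<gamma> P_meas P_nn P_le,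
      of "1" "hp x"]
  have c: "hp x + 1 * (LINT z:{x<..\<xi>}|lborel. hxz x z) = hx x \<xi>" using I by simp
  show "0 \<le> \<alpha> + \<beta> * hx x \<xi> + \<gamma> * ((hx x \<xi>)^2 + enn2real (Jp x \<xi>))"
    using ib(1) unfolding c J_def by simp
  show "(\<integral>\<^sup>+z. ennreal (fp x z) * ennreal (P (grad_plus hp hxz fp x \<xi> z)) \<partial>lborel)
          \<le> ennreal (\<alpha> + \<beta> * hx x \<xi> + \<gamma> * ((hx x \<xi>)^2 + enn2real (Jp x \<xi>)))"
    using ib(2) unfolding c J_def g_eq by simp
qed


lemma step_bound:
  fixes \<Psi> :: "real \<Rightarrow> real"
  assumes x: "x \<in> S" and hx2: "integrable D (\<lambda>\<xi>. (hx x \<xi>)^2)" and \<gamma>: "0 \<le> \<gamma>"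
    and \<Psi>_meas: "\<Psi> \<in> borel_measurable borel" and \<Psi>_nn: "\<And>v. v \<in> S \<Longrightarrow> 0 \<le> \<Psi> v"
    and \<Psi>_le: "\<And>g. \<Psi> (proj l u (x - eta * g)) \<le> \<alpha> + \<beta> * g + \<gamma> * g^2"
  shows "(\<integral>\<^sup>+v. (if v \<in> S then ennreal (\<Psi> v) else \<infinity>) \<partial>K x)
           \<le> ennreal (\<alpha> + \<beta> * Hd x + \<gamma> * ((\<integral>\<xi>. (hx x \<xi>)^2 \<partial>D) + 2 * K3))"
proof -
  note [measurable] = \<Psi>_meas C1_meas[OF x] C2_meas[OF x] hxz_meas[OF x] hx_meas[OF x] Jm_meas[OF x] Jp_meas[OF x]
  define B where "B v = (if v \<in> S then ennreal (\<Psi> v) else \<infinity>)" for v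
  have B_meas[measurable]: "B \<in> borel_measurable borel" unfolding B_def[abs_def] by measurable
  define P where "P v = \<Psi> (proj l u (x - eta * v))" for v
  have P_meas: "P \<in> borel_measurable borel" unfolding P_def[abs_def] by measurable
  have P_nn: "0 \<le> P v" for v unfolding P_def using \<Psi>_nn proj_S by blast
  have P_le: "P v \<le> \<alpha> + \<beta> * v + \<gamma> * v^2" for v unfolding P_def by (rule \<Psi>_le)
  have BP: "B (proj l u y) = ennreal (\<Psi> (proj l u y))" for y using proj_S by (simp add: B_def)
  define Nm where "Nm \<xi> = density lborel (\<lambda>z. ennreal (fm x z)) \<bind> (\<lambda>z. return borel (proj l u (x - eta * grad_minus hm hxz fm x \<xi> z)))" for \<xi>
  define Np where "Np \<xi> = density lborel (\<lambda>z. ennreal (fp x z)) \<bind> (\<lambda>z. return borel (proj l u (x - eta * grad_plus hp hxz fp x \<xi> z)))" for \<xi>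
  define U where "U = uniform_measure D {\<xi>. \<xi> \<noteq> x}"
  have K_eq: "K x = U \<bind> (\<lambda>\<xi>. if \<xi> < x then Nm \<xi> else Np \<xi>)"
  proof -
    have "(\<lambda>\<xi>. if \<xi> < x then Nm \<xi> else Np \<xi>) = (\<lambda>xi. if xi < x then
         density lborel (\<lambda>z. ennreal (fm x z)) \<bind> (\<lambda>z. return borel (proj l u (x - eta * grad_minus hm hxz fm x xi z)))
       else density lborel (\<lambda>z. ennreal (fp x z)) \<bind> (\<lambda>z. return borel (proj l u (x - eta * grad_plus hp hxz fp x xi z))))"
      by (simp add: fun_eq_iff Nm_def Np_def)
    then show ?thesis by (simp add: cba_step_def U_def)
  qed
  have sN: "sets (if \<xi> < x then Nm \<xi> else Np \<xi>) = sets borel" for \<xi>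
    unfolding Nm_def Np_def by (cases "\<xi> < x") (simp_all add: sets_bind[where N=borel])
  have spU: "space U \<noteq> {}" by (simp add: U_def)
  have step1: "(\<integral>\<^sup>+v. B v \<partial>K x) \<le> (\<integral>\<^sup>+\<xi>. (\<integral>\<^sup>+v. B v \<partial>(if \<xi> < x then Nm \<xi> else Np \<xi>)) \<partial>U)"
    unfolding K_eq by (rule nn_integral_bind_le[OF spU, where R=borel]) (use sN in auto)
  have Nm_le: "(\<integral>\<^sup>+v. B v \<partial>Nm \<xi>) \<le> (\<integral>\<^sup>+z. ennreal (fm x z) * ennreal (P (grad_minus hm hxz fm x \<xi> z)) \<partial>lborel)" for \<xi>
  proof -
    have "(\<integral>\<^sup>+v. B v \<partial>Nm \<xi>) \<le> (\<integral>\<^sup>+z. (\<integral>\<^sup>+v. B v \<partial>return borel (proj l u (x - eta * grad_minus hm hxz fm x \<xi> z))) \<partial>density lborel (\<lambda>z. ennreal (fm x z)))"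
      unfolding Nm_def by (rule nn_integral_bind_le[where R=borel]) auto
    also have "\<dots> = (\<integral>\<^sup>+z. B (proj l u (x - eta * grad_minus hm hxz fm x \<xi> z)) \<partial>density lborel (\<lambda>z. ennreal (fm x z)))"
      by (intro nn_integral_cong nn_integral_return) auto
    also have "\<dots> = (\<integral>\<^sup>+z. ennreal (fm x z) * B (proj l u (x - eta * grad_minus hm hxz fm x \<xi> z)) \<partial>lborel)"
      by (rule nn_integral_density) (unfold grad_minus_def, measurable)
    also have "\<dots> = (\<integral>\<^sup>+z. ennreal (fm x z) * ennreal (P (grad_minus hm hxz fm x \<xi> z)) \<partial>lborel)"
      by (simp add: BP P_def)
    finally show ?thesis .
  qed
  have Np_le: "(\<integral>\<^sup>+v. B v \<partial>Np \<xi>) \<le> (\<integral>\<^sup>+z. ennreal (fp x z) * ennreal (P (grad_plus hp hxz fp x \<xi> z)) \<partial>lborel)" for \<xi>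
  proof -
    have "(\<integral>\<^sup>+v. B v \<partial>Np \<xi>) \<le> (\<integral>\<^sup>+z. (\<integral>\<^sup>+v. B v \<partial>return borel (proj l u (x - eta * grad_plus hp hxz fp x \<xi> z))) \<partial>density lborel (\<lambda>z. ennreal (fp x z)))"
      unfolding Np_def by (rule nn_integral_bind_le[where R=borel]) auto
    also have "\<dots> = (\<integral>\<^sup>+z. B (proj l u (x - eta * grad_plus hp hxz fp x \<xi> z)) \<partial>density lborel (\<lambda>z. ennreal (fp x z)))"
      by (intro nn_integral_cong nn_integral_return) auto
    also have "\<dots> = (\<integral>\<^sup>+z. ennreal (fp x z) * B (proj l u (x - eta * grad_plus hp hxz fp x \<xi> z)) \<partial>lborel)"
      by (rule nn_integral_density) (unfold grad_plus_def, measurable)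
    also have "\<dots> = (\<integral>\<^sup>+z. ennreal (fp x z) * ennreal (P (grad_plus hp hxz fp x \<xi> z)) \<partial>lborel)"
      by (simp add: BP P_def)
    finally show ?thesis .
  qed
  define Jr where "Jr \<xi> = (if \<xi> < x then enn2real (Jm x \<xi>) else enn2real (Jp x \<xi>))" for \<xi>
  define s where "s \<xi> = \<alpha> + \<beta> * hx x \<xi> + \<gamma> * ((hx x \<xi>)^2 + Jr \<xi>)" for \<xi>
  have Jr_meas[measurable]: "Jr \<in> borel_measurable borel" unfolding Jr_def[abs_def] by measurable
  have s_meas[measurable]: "s \<in> borel_measurable borel" unfolding s_def[abs_def] by measurable
  have AEm: "AE \<xi> in D. \<xi> < x \<longrightarrow> Jm x \<xi> \<noteq> \<infinity>"
  proof -
    have "AE \<xi> in D. indicator {..<x} \<xi> * Jm x \<xi> \<noteq> \<infinity>"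
      using Jm_int[OF x] by (intro nn_integral_PInf_AE) (auto simp: top_unique)
    then show ?thesis by eventually_elim (auto simp: indicator_def)
  qed
  have AEp: "AE \<xi> in D. x < \<xi> \<longrightarrow> Jp x \<xi> \<noteq> \<infinity>"
  proof -
    have "AE \<xi> in D. indicator {x<..} \<xi> * Jp x \<xi> \<noteq> \<infinity>"
      using Jp_int[OF x] by (intro nn_integral_PInf_AE) (auto simp: top_unique)
    then show ?thesis by eventually_elim (auto simp: indicator_def)
  qed
  have AE_good: "AE \<xi> in D. \<xi> \<noteq> x \<longrightarrow> (\<integral>\<^sup>+v. B v \<partial>(if \<xi> < x then Nm \<xi> else Np \<xi>)) \<le> ennreal (s \<xi>) \<and> 0 \<le> s \<xi>"
    using AE_slo AEm AEp
  proof eventually_elim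
    case (elim \<xi>)
    show ?case
    proof (intro impI)
      assume "\<xi> \<noteq> x"
      then consider "\<xi> < x" | "x < \<xi>" by linarith
      then show "(\<integral>\<^sup>+v. B v \<partial>(if \<xi> < x then Nm \<xi> else Np \<xi>)) \<le> ennreal (s \<xi>) \<and> 0 \<le> s \<xi>"
      proof cases
        case 1
        note il = inner_left[OF x 1 _ _ \<gamma> P_meas P_nn P_le]
        show ?thesis using il elim 1 Nm_le[of \<xi>] by (auto simp: s_def Jr_def intro: order.trans)
      next
        case 2
        note ir = inner_right[OF x 2 _ _ \<gamma> P_meas P_nn P_le]
        show ?thesis using ir elim 2 Np_le[of \<xi>] by (auto simp: s_def Jr_def intro: order.trans)
      qed
    qed
  qed
  have step2: "(\<integral>\<^sup>+\<xi>. (\<integral>\<^sup>+v. B v \<partial>(if \<xi> < x then Nm \<xi> else Np \<xi>)) \<partial>U) \<le> (\<integral>\<^sup>+\<xi>. ennreal (s \<xi>) \<partial>U)"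
  proof (rule nn_integral_mono_AE)
    show "AE \<xi> in U. (\<integral>\<^sup>+v. B v \<partial>(if \<xi> < x then Nm \<xi> else Np \<xi>)) \<le> ennreal (s \<xi>)"
      unfolding U_def by (rule AE_uniform_measureI) (use AE_good in \<open>auto simp: D_sets elim: AE_mp\<close>)
  qed
  have emU: "emeasure D {\<xi>. \<xi> \<noteq> x} = 1"
  proof -
    have "{\<xi>. \<xi> \<noteq> x} = space D - {x}" by auto
    then have "measure D {\<xi>. \<xi> \<noteq> x} = 1" using prob_compl[of "{x}"] A1[of x] D_sets by simp
    then show ?thesis by (simp add: emeasure_eq_measure)
  qed
  have step3: "(\<integral>\<^sup>+\<xi>. ennreal (s \<xi>) \<partial>U) \<le> (\<integral>\<^sup>+\<xi>. ennreal (s \<xi>) \<partial>D)"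
  proof -
    have "(\<integral>\<^sup>+\<xi>. ennreal (s \<xi>) \<partial>U) = (\<integral>\<^sup>+\<xi>. ennreal (s \<xi>) * indicator {\<xi>. \<xi> \<noteq> x} \<xi> \<partial>D) / emeasure D {\<xi>. \<xi> \<noteq> x}"
      unfolding U_def by (rule nn_integral_uniform_measure) (auto simp: D_sets)
    also have "\<dots> = (\<integral>\<^sup>+\<xi>. ennreal (s \<xi>) * indicator {\<xi>. \<xi> \<noteq> x} \<xi> \<partial>D)" using emU by (simp add: divide_ennreal_def)
    also have "\<dots> \<le> (\<integral>\<^sup>+\<xi>. ennreal (s \<xi>) \<partial>D)"
      by (intro nn_integral_mono) (auto simp: indicator_def)
    finally show ?thesis .
  qed
  have hxi: "integrable D (hx x)" using A4_grad[OF x] by simp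
  have Jr_nn: "0 \<le> Jr \<xi>" for \<xi> by (simp add: Jr_def)
  have Jr_nn_int: "(\<integral>\<^sup>+\<xi>. ennreal (Jr \<xi>) \<partial>D) \<le> ennreal (2 * K3)"
  proof -
    have "(\<integral>\<^sup>+\<xi>. ennreal (Jr \<xi>) \<partial>D) \<le> (\<integral>\<^sup>+\<xi>. indicator {..<x} \<xi> * Jm x \<xi> + indicator {x<..} \<xi> * Jp x \<xi> \<partial>D)"
    proof (rule nn_integral_mono)
      fix \<xi>
      have Jpx: "Jp x x = 0" by (simp add: Jp_def)
      show "ennreal (Jr \<xi>) \<le> indicator {..<x} \<xi> * Jm x \<xi> + indicator {x<..} \<xi> * Jp x \<xi>"
        by (cases "\<xi> < x"; cases "\<xi> = x") (auto simp: Jr_def ennreal_enn2real_if Jpx)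
    qed
    also have "\<dots> = (\<integral>\<^sup>+\<xi>. indicator {..<x} \<xi> * Jm x \<xi> \<partial>D) + (\<integral>\<^sup>+\<xi>. indicator {x<..} \<xi> * Jp x \<xi> \<partial>D)"
      by (rule nn_integral_add) auto
    also have "\<dots> \<le> ennreal K3 + ennreal K3" using Jm_int[OF x] Jp_int[OF x] by (rule add_mono)
    also have "\<dots> = ennreal (2 * K3)" using C3_K by (simp add: ennreal_plus[symmetric] del: ennreal_plus)
    finally show ?thesis .
  qed
  have Jri: "integrable D Jr"
  proof (rule integrableI_bounded)
    show "Jr \<in> borel_measurable D" by (simp add: measurable_cong_sets[OF D_sets refl])
    have "(\<integral>\<^sup>+\<xi>. ennreal (norm (Jr \<xi>)) \<partial>D) = (\<integral>\<^sup>+\<xi>. ennreal (Jr \<xi>) \<partial>D)"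
      using Jr_nn by (intro nn_integral_cong) simp
    then show "(\<integral>\<^sup>+\<xi>. ennreal (norm (Jr \<xi>)) \<partial>D) < \<infinity>" using Jr_nn_int
      by (simp add: le_less_trans)
  qed
  have Jr_int: "(\<integral>\<xi>. Jr \<xi> \<partial>D) \<le> 2 * K3"
  proof -
    have "ennreal (\<integral>\<xi>. Jr \<xi> \<partial>D) = (\<integral>\<^sup>+\<xi>. ennreal (Jr \<xi>) \<partial>D)"
      using Jri Jr_nn by (intro nn_integral_eq_integral[symmetric]) auto
    then have "ennreal (\<integral>\<xi>. Jr \<xi> \<partial>D) \<le> ennreal (2 * K3)" using Jr_nn_int by simp
    then show ?thesis using C3_K by (simp add: ennreal_le_iff)
  qed
  have si: "integrable D s" unfolding s_def[abs_def] using hxi hx2 Jri by auto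
  have AE_s: "AE \<xi> in D. 0 \<le> s \<xi>"
    using AE_good AE_not_in[OF singleton_null[of x]] by eventually_elim auto
  have step4: "(\<integral>\<^sup>+\<xi>. ennreal (s \<xi>) \<partial>D) = ennreal (\<integral>\<xi>. s \<xi> \<partial>D)"
    by (rule nn_integral_eq_integral[OF si AE_s])
  have "(\<integral>\<xi>. s \<xi> \<partial>D) = \<alpha> + \<beta> * (\<integral>\<xi>. hx x \<xi> \<partial>D) + \<gamma> * ((\<integral>\<xi>. (hx x \<xi>)^2 \<partial>D) + (\<integral>\<xi>. Jr \<xi> \<partial>D))"
    unfolding s_def using hxi hx2 Jri prob_space by (simp add: space_D[symmetric] del: space_D)
  also have "\<dots> \<le> \<alpha> + \<beta> * Hd x + \<gamma> * ((\<integral>\<xi>. (hx x \<xi>)^2 \<partial>D) + 2 * K3)"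
    using A4_grad[OF x] Jr_int \<gamma> by (simp add: mult_left_mono)
  finally have step5: "(\<integral>\<xi>. s \<xi> \<partial>D) \<le> \<alpha> + \<beta> * Hd x + \<gamma> * ((\<integral>\<xi>. (hx x \<xi>)^2 \<partial>D) + 2 * K3)" .
  have "(\<integral>\<^sup>+v. B v \<partial>K x) \<le> ennreal (\<integral>\<xi>. s \<xi> \<partial>D)"
    using step1 step2 step3 step4 by (metis order.trans)
  also have "\<dots> \<le> ennreal (\<alpha> + \<beta> * Hd x + \<gamma> * ((\<integral>\<xi>. (hx x \<xi>)^2 \<partial>D) + 2 * K3))"
    using step5 by (rule ennreal_leI)
  finally show ?thesis unfolding B_def .
qed

end


lemma descent:
  fixes H Hd :: "real \<Rightarrow> real" and S :: "real set"
  assumes der: "\<And>t. t \<in> S \<Longrightarrow> (H has_real_derivative Hd t) (at t within S)"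
    and lip: "L-lipschitz_on S Hd"
    and cvx: "\<And>a b c. a \<in> S \<Longrightarrow> b \<in> S \<Longrightarrow> a \<le> c \<Longrightarrow> c \<le> b \<Longrightarrow> c \<in> S"
    and x: "x \<in> S" and v: "v \<in> S"
  shows "H v \<le> H x + Hd x * (v - x) + L / 2 * (v - x)^2"
proof -
  define \<phi> where "\<phi> t = H t - Hd x * t - L / 2 * (t - x)^2" for t
  define \<phi>' where "\<phi>' t = Hd t - Hd x - L * (t - x)" for t
  have dphi: "(\<phi> has_derivative (\<lambda>h. \<phi>' t * h)) (at t within {a..b})"
    if "a \<in> S" "b \<in> S" "a \<le> t" "t \<le> b" for a b t
  proof -
    have tS: "t \<in> S" by (rule cvx[OF that])
    have sub: "{a..b} \<subseteq> S"
    proof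
      fix c assume "c \<in> {a..b}"
      then show "c \<in> S" using cvx[OF that(1,2), of c] by simp
    qed
    have "(H has_real_derivative Hd t) (at t within {a..b})"
      by (rule has_field_derivative_subset[OF der[OF tS] sub])
    then have "(\<phi> has_real_derivative (Hd t - Hd x * 1 - L / 2 * (2 * (t - x) * 1))) (at t within {a..b})"
      unfolding \<phi>_def by (auto intro!: derivative_eq_intros)
    then have "(\<phi> has_real_derivative \<phi>' t) (at t within {a..b})" by (simp add: \<phi>'_def algebra_simps)
    then show ?thesis by (simp add: has_field_derivative_def)
  qed
  have lipD: "\<bar>Hd t - Hd x\<bar> \<le> L * \<bar>t - x\<bar>" if "t \<in> S" for t
    using lipschitz_onD[OF lip that x] by (simp add: dist_real_def)
  have "\<phi> v \<le> \<phi> x"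
  proof (cases "x < v")
    case True
    obtain \<xi> where \<xi>: "\<xi> \<in> {x<..<v}" "\<phi> v - \<phi> x = \<phi>' \<xi> * (v - x)"
      using mvt_simple[OF True, of \<phi> "\<lambda>t h. \<phi>' t * h"] dphi[OF x v] by auto
    have "\<xi> \<in> S" using cvx[OF x v, of \<xi>] \<xi>(1) by simp
    then have "\<phi>' \<xi> \<le> 0" using lipD[of \<xi>] \<xi>(1) unfolding \<phi>'_def by (auto simp: abs_le_iff algebra_simps)
    then have "\<phi>' \<xi> * (v - x) \<le> 0" using True by (simp add: mult_nonpos_nonneg)
    then show ?thesis using \<xi>(2) by simp
  next
    case False
    show ?thesis
    proof (cases "v = x")
      case True then show ?thesis by simp
    next
      case False
      then have vx: "v < x" using \<open>\<not> x < v\<close> by simp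
      obtain \<xi> where \<xi>: "\<xi> \<in> {v<..<x}" "\<phi> x - \<phi> v = \<phi>' \<xi> * (x - v)"
        using mvt_simple[OF vx, of \<phi> "\<lambda>t h. \<phi>' t * h"] dphi[OF v x] by auto
      have "\<xi> \<in> S" using cvx[OF v x, of \<xi>] \<xi>(1) by simp
      then have "0 \<le> \<phi>' \<xi>" using lipD[of \<xi>] \<xi>(1) unfolding \<phi>'_def by (auto simp: abs_le_iff algebra_simps)
      then have "0 \<le> \<phi>' \<xi> * (x - v)" using vx by simp
      then show ?thesis using \<xi>(2) by simp
    qed
  qed
  then show ?thesis by (simp add: \<phi>_def algebra_simps)
qed

lemma quad_ii_alg:
  fixes v x y g Hd Hv Hy L eta :: real
  assumes eta: "0 < eta" and c: "0 < 1 / eta - L"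
    and h1: "Hv - Hy \<le> Hd * (v - y) + L / 2 * (v - x)^2"
    and h2: "(y - v) * (x - eta * g - v) \<le> 0"
  shows "(v - y)^2 / (2 * eta) + (Hv - Hy) \<le> (x - y)^2 / (2 * eta) + (Hd - g) * (x - y) + (Hd - g)^2 / (2 * (1 / eta - L))"
proof -
  define c where "c = 1 / eta - L"
  define d where "d = v - x"
  define e where "e = x - y"
  define \<delta> where "\<delta> = Hd - g"
  have c0: "0 < c" using c by (simp add: c_def)
  have L: "L = 1 / eta - c" by (simp add: c_def)
  have h2': "(d + e) * d + eta * (g * (d + e)) \<le> 0"
  proof -
    have "(y - v) * (x - eta * g - v) = (d + e) * d + eta * (g * (d + e))"
      by (simp add: d_def e_def algebra_simps)
    then show ?thesis using h2 by simp
  qed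
  have A: "0 \<le> - g * (d + e) - (d + e) * d / eta"
  proof -
    have "((d + e) * d + eta * (g * (d + e))) / eta \<le> 0" using h2' eta by (simp add: divide_nonpos_pos)
    moreover have "((d + e) * d + eta * (g * (d + e))) / eta = (d + e) * d / eta + g * (d + e)"
      using eta by (simp add: field_simps)
    ultimately show ?thesis by linarith
  qed
  have B: "0 \<le> (c * d - \<delta>)^2 / (2 * c)" using c0 by simp
  have eq: "(x - y)^2 / (2 * eta) + (Hd - g) * (x - y) + (Hd - g)^2 / (2 * c)
      - ((v - y)^2 / (2 * eta) + Hd * (v - y) + L / 2 * (v - x)^2)
      = (- g * (d + e) - (d + e) * d / eta) + (c * d - \<delta>)^2 / (2 * c)"
    unfolding L d_def e_def \<delta>_def using eta c0
    by (simp add: field_simps power2_eq_square)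
  have "(v - y)^2 / (2 * eta) + Hd * (v - y) + L / 2 * (v - x)^2 \<le> (x - y)^2 / (2 * eta) + (Hd - g) * (x - y) + (Hd - g)^2 / (2 * c)"
    using eq A B by linarith
  then show ?thesis using h1 by (simp add: c_def)
qed


context cba begin

lemma sets_K: "sets (K x) = sets borel"
proof -
  have "sets (if \<xi> < x then density lborel (\<lambda>z. ennreal (fm x z)) \<bind> (\<lambda>z. return borel (proj l u (x - eta * grad_minus hm hxz fm x \<xi> z)))
     else density lborel (\<lambda>z. ennreal (fp x z)) \<bind> (\<lambda>z. return borel (proj l u (x - eta * grad_plus hp hxz fp x \<xi> z)))) = sets borel" for \<xi>
    by (cases "\<xi> < x") (simp_all add: sets_bind[where N=borel])
  then show ?thesis unfolding cba_step_def by (subst sets_bind[where N=borel]) auto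
qed

lemma space_K[simp]: "space (K x) = UNIV"
  using sets_eq_imp_space_eq[OF sets_K[of x]] by simp

lemma sets_run: "sets (cba_run K n x s) = sets (borel :: (real \<times> real) measure)"
proof (induction n arbitrary: x s)
  case 0 then show ?case by simp
next
  case (Suc n)
  have "sets (K x \<bind> (\<lambda>x'. cba_run K n x' (s + x))) = sets borel"
    by (rule sets_bind) (auto simp: Suc.IH)
  then show ?case by simp
qed

lemma K_mass:
  assumes x: "x \<in> S" and hx2: "integrable D (\<lambda>\<xi>. (hx x \<xi>)^2)"
  shows "(\<integral>\<^sup>+v. (if v \<in> S then 1 else \<infinity>) \<partial>K x) \<le> 1"
proof -
  have "(\<integral>\<^sup>+v. (if v \<in> S then ennreal 1 else \<infinity>) \<partial>K x) \<le> ennreal 1"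
    using step_bound[OF x hx2 order.refl, of "\<lambda>_. 1" 1 0] by simp
  then show ?thesis by (simp only: ennreal_1)
qed

lemma run_bound:
  fixes \<Phi> :: "nat \<Rightarrow> real \<Rightarrow> real" and y :: real and T :: nat
  assumes T: "T \<ge> 1" and y: "y \<in> S" and opt: "\<And>v. v \<in> S \<Longrightarrow> H y \<le> H v"
    and Hc: "continuous_on S H" and conv: "\<And>a b. a \<in> S \<Longrightarrow> b \<in> S \<Longrightarrow> H a + Hd a * (b - a) \<le> H b"
    and hx2: "\<And>x. x \<in> S \<Longrightarrow> integrable D (\<lambda>\<xi>. (hx x \<xi>)^2)"
    and \<Phi>_meas: "\<And>n. \<Phi> n \<in> borel_measurable borel" and \<Phi>_nn: "\<And>n v. v \<in> S \<Longrightarrow> 0 \<le> \<Phi> n v"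
    and \<Phi>_step: "\<And>n x. x \<in> S \<Longrightarrow> (\<integral>\<^sup>+v. (if v \<in> S then ennreal (\<Phi> n v) else \<infinity>) \<partial>K x) \<le> ennreal (\<Phi> (Suc n) x - (H x - H y))"
    and \<Phi>_step_nn: "\<And>n x. x \<in> S \<Longrightarrow> H x - H y \<le> \<Phi> (Suc n) x"
  defines "G \<equiv> \<lambda>p::real\<times>real. if snd p / real T \<in> S then ennreal (H (snd p / real T) - H y) else \<infinity>"
  shows "x \<in> S \<Longrightarrow> m \<in> S \<Longrightarrow> k + n = T \<Longrightarrow>
     (\<integral>\<^sup>+p. G p \<partial>cba_run K n x (real k * m)) \<le> ennreal ((real k * (H m - H y) + \<Phi> n x) / real T)"
proof (induction n arbitrary: x k m)
  have T0: "0 < real T" using T by simp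
  define H' where "H' v = indicator S v *\<^sub>R H v" for v
  have H'_meas[measurable]: "H' \<in> borel_measurable borel"
    unfolding H'_def[abs_def] by (rule borel_measurable_continuous_on_indicator[OF feas_borel Hc])
  have Geq: "G = (\<lambda>p. if snd p / real T \<in> S then ennreal (H' (snd p / real T) - H y) else \<infinity>)"
    by (auto simp: G_def H'_def fun_eq_iff)
  have q_meas[measurable]: "(\<lambda>p::real\<times>real. snd p / real T) \<in> borel_measurable borel"
    using T0 by (intro borel_measurable_continuous_onI continuous_intros) auto
  have G_meas[measurable]: "G \<in> borel_measurable borel" unfolding Geq by measurable
  {
    case 0
    then have kT: "k = T" by simp
    have mS: "real T * m / real T \<in> S" using 0 T0 by simp
    have "(\<integral>\<^sup>+p. G p \<partial>cba_run K 0 x (real k * m)) = G (x, real T * m)"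
      using kT by (simp add: nn_integral_return)
    also have "\<dots> = ennreal (H m - H y)" using mS T0 by (simp add: G_def)
    also have "\<dots> \<le> ennreal ((real k * (H m - H y) + \<Phi> 0 x) / real T)"
      using \<Phi>_nn[OF 0(1), of 0] T0 kT by (intro ennreal_leI) (simp add: field_simps)
    finally show ?case .
  next
    case (Suc n)
    have x: "x \<in> S" "m \<in> S" "k + Suc n = T" using Suc.prems by auto
    define m' where "m' = (real k * m + x) / real (Suc k)"
    have m'S: "m' \<in> S"
    proof -
      have lo: "min m x \<le> m'"
      proof -
        have a: "min m x \<le> x" by simp
        have b: "real k * min m x \<le> real k * m" by (intro mult_left_mono) auto
        have "real (Suc k) * min m x = min m x + real k * min m x" by (simp add: algebra_simps)
        then have "real (Suc k) * min m x \<le> real k * m + x" using a b by linarith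
        then show ?thesis by (simp add: m'_def field_simps del: of_nat_Suc)
      qed
      have hi: "m' \<le> max m x"
      proof -
        have a: "x \<le> max m x" by simp
        have b: "real k * m \<le> real k * max m x" by (intro mult_left_mono) auto
        have "real (Suc k) * max m x = max m x + real k * max m x" by (simp add: algebra_simps)
        then have "real k * m + x \<le> real (Suc k) * max m x" using a b by linarith
        then show ?thesis by (simp add: m'_def field_simps del: of_nat_Suc)
      qed
      have "min m x \<in> S" "max m x \<in> S" using x by (auto simp: min_def max_def)
      then show ?thesis using feas_interval lo hi by blast
    qed
    have km: "real k * m + x = real (Suc k) * m'" by (simp add: m'_def del: of_nat_Suc)
    have conv_m: "real (Suc k) * (H m' - H y) \<le> real k * (H m - H y) + (H x - H y)"
    proof -
      have c1: "H m' + Hd m' * (m - m') \<le> H m" using conv[OF m'S x(2)] .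
      have c2: "H m' + Hd m' * (x - m') \<le> H x" using conv[OF m'S x(1)] .
      have "real k * (H m' + Hd m' * (m - m')) \<le> real k * H m" using c1 by (intro mult_left_mono) auto
      moreover have "real k * (m - m') + (x - m') = 0" using km by (simp add: algebra_simps)
      then have "real k * (Hd m' * (m - m')) + Hd m' * (x - m') = 0"
        by (metis (no_types, lifting) distrib_left mult.left_commute mult_zero_right)
      ultimately show ?thesis using c2 by (simp add: algebra_simps)
    qed
    define c0 where "c0 = real (Suc k) * (H m' - H y) / real T"
    have c0_nn: "0 \<le> c0" using opt[OF m'S] T0 by (simp add: c0_def)
    define A1 where "A1 v = (if v \<in> S then 1 else \<infinity> :: ennreal)" for v
    define A2 where "A2 v = (if v \<in> S then ennreal (\<Phi> n v) else \<infinity>)" for v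
    have [measurable]: "\<Phi> n \<in> borel_measurable borel" by (rule \<Phi>_meas)
    have A1m: "A1 \<in> borel_measurable (K x)" unfolding A1_def[abs_def] measurable_cong_sets[OF sets_K refl] by measurable
    have A2m: "A2 \<in> borel_measurable (K x)" unfolding A2_def[abs_def] measurable_cong_sets[OF sets_K refl] by measurable
    have "(\<integral>\<^sup>+p. G p \<partial>cba_run K (Suc n) x (real k * m)) = (\<integral>\<^sup>+p. G p \<partial>(K x \<bind> (\<lambda>x'. cba_run K n x' (real (Suc k) * m'))))"
      by (simp add: km del: of_nat_Suc)
    also have "\<dots> \<le> (\<integral>\<^sup>+x'. (\<integral>\<^sup>+p. G p \<partial>cba_run K n x' (real (Suc k) * m')) \<partial>K x)"
      by (rule nn_integral_bind_le[where R=borel]) (auto simp: sets_run)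
    also have "\<dots> \<le> (\<integral>\<^sup>+x'. ennreal c0 * A1 x' + ennreal (1 / real T) * A2 x' \<partial>K x)"
    proof (rule nn_integral_mono)
      fix x'
      show "(\<integral>\<^sup>+p. G p \<partial>cba_run K n x' (real (Suc k) * m')) \<le> ennreal c0 * A1 x' + ennreal (1 / real T) * A2 x'"
      proof (cases "x' \<in> S")
        case True
        have "(\<integral>\<^sup>+p. G p \<partial>cba_run K n x' (real (Suc k) * m')) \<le> ennreal ((real (Suc k) * (H m' - H y) + \<Phi> n x') / real T)"
          using Suc.IH[OF True m'S, of "Suc k"] x(3) by (simp del: of_nat_Suc)
        also have "\<dots> = ennreal (c0 + (1 / real T) * \<Phi> n x')"
          by (simp add: c0_def add_divide_distrib del: of_nat_Suc)
        also have "\<dots> = ennreal c0 * A1 x' + ennreal (1 / real T) * A2 x'"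
        proof -
          have e: "ennreal (1 / real T * \<Phi> n x') = ennreal (1 / real T) * ennreal (\<Phi> n x')"
            by (rule ennreal_mult) (use \<Phi>_nn[OF True, of n] T0 in auto)
          have "ennreal (c0 + 1 / real T * \<Phi> n x') = ennreal c0 + ennreal (1 / real T * \<Phi> n x')"
            by (rule ennreal_plus) (use c0_nn \<Phi>_nn[OF True, of n] T0 in auto)
          then show ?thesis using e True by (simp only: A1_def A2_def if_True mult_1_right)
        qed
        finally show ?thesis .
      next
        case False
        then show ?thesis using T0 by (simp add: A1_def A2_def)
      qed
    qed
    also have "\<dots> = ennreal c0 * (\<integral>\<^sup>+x'. A1 x' \<partial>K x) + ennreal (1 / real T) * (\<integral>\<^sup>+x'. A2 x' \<partial>K x)"
      using A1m A2m by (simp add: nn_integral_add nn_integral_cmult)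
    also have "\<dots> \<le> ennreal c0 * 1 + ennreal (1 / real T) * ennreal (\<Phi> (Suc n) x - (H x - H y))"
      using K_mass[OF x(1) hx2[OF x(1)]] \<Phi>_step[OF x(1), of n]
      by (intro add_mono mult_left_mono) (auto simp: A1_def A2_def)
    also have "\<dots> = ennreal (c0 + (1 / real T) * (\<Phi> (Suc n) x - (H x - H y)))"
    proof -
      have e: "ennreal (1 / real T * (\<Phi> (Suc n) x - (H x - H y))) = ennreal (1 / real T) * ennreal (\<Phi> (Suc n) x - (H x - H y))"
        by (rule ennreal_mult) (use \<Phi>_step_nn[OF x(1), of n] T0 in auto)
      have "ennreal (c0 + 1 / real T * (\<Phi> (Suc n) x - (H x - H y))) = ennreal c0 + ennreal (1 / real T * (\<Phi> (Suc n) x - (H x - H y)))"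
        by (rule ennreal_plus) (use c0_nn \<Phi>_step_nn[OF x(1), of n] T0 in auto)
      then show ?thesis using e by (simp only: mult_1_right)
    qed
    also have "\<dots> \<le> ennreal ((real k * (H m - H y) + \<Phi> (Suc n) x) / real T)"
    proof (rule ennreal_leI)
      have "c0 + (1 / real T) * (\<Phi> (Suc n) x - (H x - H y))
          = (real (Suc k) * (H m' - H y) + \<Phi> (Suc n) x - (H x - H y)) / real T"
        using T0 by (simp add: c0_def field_simps del: of_nat_Suc)
      also have "\<dots> \<le> (real k * (H m - H y) + \<Phi> (Suc n) x) / real T"
        using conv_m T0 by (intro divide_right_mono) auto
      finally show "c0 + (1 / real T) * (\<Phi> (Suc n) x - (H x - H y)) \<le> (real k * (H m - H y) + \<Phi> (Suc n) x) / real T" .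
    qed
    finally show ?case .
  }
qed

end


context cba begin

lemma bochner_bound:
  fixes M :: "(real \<times> real) measure" and y B :: real and T :: nat
  assumes nn: "(\<integral>\<^sup>+p. (if snd p / real T \<in> S then ennreal (H (snd p / real T) - H y) else \<infinity>) \<partial>M) \<le> ennreal B"
    and B: "0 \<le> B"
  shows "(\<integral>p. H (snd p / real T) - H y \<partial>M) \<le> B"
proof (cases "integrable M (\<lambda>p. H (snd p / real T) - H y)")
  case True
  have le: "(\<integral>\<^sup>+p. ennreal (H (snd p / real T) - H y) \<partial>M) \<le> ennreal B"
    by (rule order.trans[OF nn_integral_mono nn]) auto
  then have fin: "(\<integral>\<^sup>+p. ennreal (H (snd p / real T) - H y) \<partial>M) \<noteq> \<infinity>" by (auto simp: top_unique)
  have "enn2real (\<integral>\<^sup>+p. ennreal (H (snd p / real T) - H y) \<partial>M) \<le> B"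
  proof -
    have "ennreal (enn2real (\<integral>\<^sup>+p. ennreal (H (snd p / real T) - H y) \<partial>M)) \<le> ennreal B"
      using le fin by (simp add: ennreal_enn2real_if)
    then show ?thesis using B by (simp add: ennreal_le_iff)
  qed
  moreover have "0 \<le> enn2real (\<integral>\<^sup>+x. ennreal (- (H (snd x / real T) - H y)) \<partial>M)" by simp
  ultimately show ?thesis using real_lebesgue_integral_def[OF True] by linarith
next
  case False
  then show ?thesis using B by (simp add: not_integrable_integral_eq)
qed

lemma hx2_K1:
  assumes x: "x \<in> S" and K1: "(\<integral>\<^sup>+\<xi>. ennreal ((hx x \<xi>)^2) \<partial>D) \<le> ennreal (K1^2)"
  shows "integrable D (\<lambda>\<xi>. (hx x \<xi>)^2)" and "(\<integral>\<xi>. (hx x \<xi>)^2 \<partial>D) \<le> K1^2"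
proof -
  have [measurable]: "hx x \<in> borel_measurable borel" by (rule hx_meas[OF x])
  show i: "integrable D (\<lambda>\<xi>. (hx x \<xi>)^2)"
  proof (rule integrableI_bounded)
    show "(\<lambda>\<xi>. (hx x \<xi>)^2) \<in> borel_measurable D" by (simp add: measurable_cong_sets[OF D_sets refl])
    show "(\<integral>\<^sup>+\<xi>. ennreal (norm ((hx x \<xi>)^2)) \<partial>D) < \<infinity>" using K1 by (simp add: le_less_trans)
  qed
  have "ennreal (\<integral>\<xi>. (hx x \<xi>)^2 \<partial>D) = (\<integral>\<^sup>+\<xi>. ennreal ((hx x \<xi>)^2) \<partial>D)"
    using i by (intro nn_integral_eq_integral[symmetric]) auto
  then have "ennreal (\<integral>\<xi>. (hx x \<xi>)^2 \<partial>D) \<le> ennreal (K1^2)" using K1 by simp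
  then show "(\<integral>\<xi>. (hx x \<xi>)^2 \<partial>D) \<le> K1^2" by (simp add: ennreal_le_iff)
qed

lemma var_eq:
  assumes x: "x \<in> S" and i2: "integrable D (\<lambda>\<xi>. (hx x \<xi>)^2)"
  shows "(\<integral>\<xi>. (hx x \<xi> - Hd x)^2 \<partial>D) = (\<integral>\<xi>. (hx x \<xi>)^2 \<partial>D) - (Hd x)^2"
proof -
  have i1: "integrable D (hx x)" and e: "(\<integral>\<xi>. hx x \<xi> \<partial>D) = Hd x" using A4_grad[OF x] by auto
  have "(\<lambda>\<xi>. (hx x \<xi> - Hd x)^2) = (\<lambda>\<xi>. (hx x \<xi>)^2 - 2 * Hd x * hx x \<xi> + (Hd x)^2)"
    by (auto simp: fun_eq_iff power2_eq_square algebra_simps)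
  then have "(\<integral>\<xi>. (hx x \<xi> - Hd x)^2 \<partial>D) = (\<integral>\<xi>. (hx x \<xi>)^2 \<partial>D) - 2 * Hd x * (\<integral>\<xi>. hx x \<xi> \<partial>D) + (Hd x)^2"
    using i1 i2 prob_space by (simp add: space_D[symmetric] del: space_D)
  then show ?thesis using e by (simp add: power2_eq_square)
qed

lemma hx2_K2:
  assumes x: "x \<in> S" and K2: "(\<integral>\<^sup>+\<xi>. ennreal ((hx x \<xi> - Hd x)^2) \<partial>D) \<le> ennreal (K2^2)"
  shows "integrable D (\<lambda>\<xi>. (hx x \<xi>)^2)" and "(\<integral>\<xi>. (hx x \<xi>)^2 \<partial>D) - (Hd x)^2 \<le> K2^2"
proof -
  have [measurable]: "hx x \<in> borel_measurable borel" by (rule hx_meas[OF x])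
  have i1: "integrable D (hx x)" using A4_grad[OF x] by auto
  have iv: "integrable D (\<lambda>\<xi>. (hx x \<xi> - Hd x)^2)"
  proof (rule integrableI_bounded)
    show "(\<lambda>\<xi>. (hx x \<xi> - Hd x)^2) \<in> borel_measurable D" by (simp add: measurable_cong_sets[OF D_sets refl])
    show "(\<integral>\<^sup>+\<xi>. ennreal (norm ((hx x \<xi> - Hd x)^2)) \<partial>D) < \<infinity>" using K2 by (simp add: le_less_trans)
  qed
  have "(\<lambda>\<xi>. (hx x \<xi>)^2) = (\<lambda>\<xi>. (hx x \<xi> - Hd x)^2 + 2 * Hd x * hx x \<xi> - (Hd x)^2)"
    by (auto simp: fun_eq_iff power2_eq_square algebra_simps)
  then show i2: "integrable D (\<lambda>\<xi>. (hx x \<xi>)^2)" using iv i1 by simp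
  have "ennreal (\<integral>\<xi>. (hx x \<xi> - Hd x)^2 \<partial>D) = (\<integral>\<^sup>+\<xi>. ennreal ((hx x \<xi> - Hd x)^2) \<partial>D)"
    using iv by (intro nn_integral_eq_integral[symmetric]) auto
  then have "ennreal (\<integral>\<xi>. (hx x \<xi> - Hd x)^2 \<partial>D) \<le> ennreal (K2^2)" using K2 by simp
  then have "(\<integral>\<xi>. (hx x \<xi> - Hd x)^2 \<partial>D) \<le> K2^2" by (simp add: ennreal_le_iff)
  then show "(\<integral>\<xi>. (hx x \<xi>)^2 \<partial>D) - (Hd x)^2 \<le> K2^2" using var_eq[OF x i2] by simp
qed


lemma proj_sq_le:
  assumes y: "y \<in> S" shows "(proj l u z - y)^2 \<le> (z - y)^2"
proof -
  let ?p = "proj l u z"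
  have h: "(y - ?p) * (z - ?p) \<le> 0" using proj_nonexp[OF y] .
  have "(z - y)^2 - (?p - y)^2 = (z - ?p)^2 + 2 * (- ((y - ?p) * (z - ?p)))"
    by (simp add: power2_eq_square algebra_simps)
  moreover have "0 \<le> (z - ?p)^2 + 2 * (- ((y - ?p) * (z - ?p)))" using h zero_le_power2[of "z - ?p"] by linarith
  ultimately show ?thesis by linarith
qed

lemma final_i:
  fixes T :: nat and y x1 K1 :: real
  assumes T: "T \<ge> 1" and x1: "x1 \<in> S" and y: "y \<in> S" and opt: "\<And>v. v \<in> S \<Longrightarrow> H y \<le> H v"
    and Hc: "continuous_on S H" and conv: "\<And>a b. a \<in> S \<Longrightarrow> b \<in> S \<Longrightarrow> H a + Hd a * (b - a) \<le> H b"
    and K1: "\<forall>x\<in>S. (\<integral>\<^sup>+\<xi>. ennreal ((hx x \<xi>)^2) \<partial>D) \<le> ennreal (K1^2)"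
  shows "(\<integral>p. H (snd p / real T) - H y \<partial>cba_run K T x1 0) \<le> (x1 - y)^2 / (2 * eta * real T) + eta * (K1^2 + 2 * K3) / 2"
proof -
  define C where "C = eta * (K1^2 + 2 * K3) / 2"
  have C0: "0 \<le> C" using eta C3_K by (simp add: C_def)
  define \<Phi> where "\<Phi> n v = (v - y)^2 / (2 * eta) + real n * C" for n v
  have \<Phi>_meas: "\<Phi> n \<in> borel_measurable borel" for n unfolding \<Phi>_def[abs_def] by measurable
  have \<Phi>_nn: "0 \<le> \<Phi> n v" for n v using eta C0 by (simp add: \<Phi>_def)
  have hx2: "integrable D (\<lambda>\<xi>. (hx x \<xi>)^2)" if "x \<in> S" for x using hx2_K1(1)[OF that] K1 that by blast
  have hx2b: "(\<integral>\<xi>. (hx x \<xi>)^2 \<partial>D) \<le> K1^2" if "x \<in> S" for x using hx2_K1(2)[OF that] K1 that by blast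
  have cxy: "H x - H y \<le> Hd x * (x - y)" if "x \<in> S" for x
    using conv[OF that y] by (simp add: algebra_simps)
  have step: "(\<integral>\<^sup>+v. (if v \<in> S then ennreal (\<Phi> n v) else \<infinity>) \<partial>K x) \<le> ennreal (\<Phi> (Suc n) x - (H x - H y))"
    if x: "x \<in> S" for n x
  proof -
    have le: "\<Phi> n (proj l u (x - eta * g)) \<le> ((x - y)^2 / (2 * eta) + real n * C) + (- (x - y)) * g + (eta / 2) * g^2" for g
    proof -
      have "(proj l u (x - eta * g) - y)^2 / (2 * eta) \<le> (x - eta * g - y)^2 / (2 * eta)"
        using proj_sq_le[OF y] eta by (intro divide_right_mono) auto
      also have "\<dots> = (x - y)^2 / (2 * eta) + (- (x - y)) * g + (eta / 2) * g^2"
        using eta by (simp add: field_simps power2_eq_square)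
      finally show ?thesis by (simp add: \<Phi>_def)
    qed
    have sb: "(\<integral>\<^sup>+v. (if v \<in> S then ennreal (\<Phi> n v) else \<infinity>) \<partial>K x)
        \<le> ennreal (((x - y)^2 / (2 * eta) + real n * C) + (- (x - y)) * Hd x + (eta / 2) * ((\<integral>\<xi>. (hx x \<xi>)^2 \<partial>D) + 2 * K3))"
      by (rule step_bound[OF x hx2[OF x] _ \<Phi>_meas \<Phi>_nn le]) (use eta in simp)
    have "((x - y)^2 / (2 * eta) + real n * C) + (- (x - y)) * Hd x + (eta / 2) * ((\<integral>\<xi>. (hx x \<xi>)^2 \<partial>D) + 2 * K3)
        \<le> \<Phi> (Suc n) x - (H x - H y)"
    proof -
      have "(eta / 2) * ((\<integral>\<xi>. (hx x \<xi>)^2 \<partial>D) + 2 * K3) \<le> (eta / 2) * (K1^2 + 2 * K3)"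
        using hx2b[OF x] eta by (intro mult_left_mono) auto
      moreover have "\<Phi> (Suc n) x = (x - y)^2 / (2 * eta) + real n * C + C" by (simp add: \<Phi>_def algebra_simps)
      moreover have "C = (eta / 2) * (K1^2 + 2 * K3)" by (simp add: C_def)
      moreover have "(- (x - y)) * Hd x = - (Hd x * (x - y))" by (simp add: algebra_simps)
      ultimately show ?thesis using cxy[OF x] by linarith
    qed
    then show ?thesis using sb by (meson ennreal_leI order.trans)
  qed
  have step_nn: "H x - H y \<le> \<Phi> (Suc n) x" if x: "x \<in> S" for n x
  proof -
    have v: "0 \<le> (\<integral>\<xi>. (hx x \<xi>)^2 \<partial>D) - (Hd x)^2"
      using var_eq[OF x hx2[OF x]] by (metis integral_nonneg_AE AE_I2 zero_le_power2)
    have am: "Hd x * (x - y) \<le> (x - y)^2 / (2 * eta) + eta * (Hd x)^2 / 2"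
    proof -
      have "0 \<le> (x - y - eta * Hd x)^2 / (2 * eta)" using eta by simp
      moreover have "(x - y - eta * Hd x)^2 / (2 * eta) = (x - y)^2 / (2 * eta) + eta * (Hd x)^2 / 2 - Hd x * (x - y)"
        using eta by (simp add: field_simps power2_eq_square)
      ultimately show ?thesis by linarith
    qed
    have "eta * (Hd x)^2 / 2 \<le> C"
    proof -
      have "(Hd x)^2 \<le> K1^2 + 2 * K3" using v hx2b[OF x] C3_K by linarith
      then show ?thesis using eta by (simp add: C_def mult_left_mono divide_right_mono)
    qed
    moreover have "C \<le> real (Suc n) * C" using C0 by (simp add: algebra_simps)
    ultimately show ?thesis using cxy[OF x] am by (simp add: \<Phi>_def)
  qed
  have rb: "(\<integral>\<^sup>+p. (if snd p / real T \<in> S then ennreal (H (snd p / real T) - H y) else \<infinity>) \<partial>cba_run K T x1 (real 0 * x1))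
      \<le> ennreal ((real 0 * (H x1 - H y) + \<Phi> T x1) / real T)"
    by (rule run_bound[where \<Phi>=\<Phi> and y=y and T=T and x=x1 and m=x1 and k=0 and n=T, OF T y opt Hc conv hx2 \<Phi>_meas \<Phi>_nn step step_nn x1 x1]) auto
  have "(\<integral>p. H (snd p / real T) - H y \<partial>cba_run K T x1 0) \<le> \<Phi> T x1 / real T"
    by (rule bochner_bound) (use rb \<Phi>_nn T in auto)
  also have "\<Phi> T x1 / real T = (x1 - y)^2 / (2 * eta * real T) + eta * (K1^2 + 2 * K3) / 2"
    using T eta by (simp add: \<Phi>_def C_def field_simps)
  finally show ?thesis .
qed


lemma final_ii:
  fixes T :: nat and y x1 K2 L :: real
  assumes T: "T \<ge> 1" and x1: "x1 \<in> S" and y: "y \<in> S" and opt: "\<And>v. v \<in> S \<Longrightarrow> H y \<le> H v"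
    and Hc: "continuous_on S H" and conv: "\<And>a b. a \<in> S \<Longrightarrow> b \<in> S \<Longrightarrow> H a + Hd a * (b - a) \<le> H b"
    and der: "\<And>t. t \<in> S \<Longrightarrow> (H has_real_derivative Hd t) (at t within S)"
    and lip: "L-lipschitz_on S Hd"
    and K2: "\<forall>x\<in>S. (\<integral>\<^sup>+\<xi>. ennreal ((hx x \<xi> - Hd x)^2) \<partial>D) \<le> ennreal (K2^2)"
    and etaL: "eta * L < 1"
  shows "(\<integral>p. H (snd p / real T) - H y \<partial>cba_run K T x1 0)
      \<le> (x1 - y)^2 / (2 * eta * real T) + (H x1 - H y) / real T + (K2^2 + 2 * K3) / (1 / eta - L)"
proof -
  have L0: "0 \<le> L" using lip by (rule lipschitz_on_nonneg)
  define c where "c = 1 / eta - L"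
  have c0: "0 < c"
  proof -
    have "L < 1 / eta" using etaL eta by (simp add: field_simps)
    then show ?thesis by (simp add: c_def)
  qed
  define C where "C = (K2^2 + 2 * K3) / (2 * c)"
  have C0: "0 \<le> C" using c0 C3_K by (simp add: C_def)
  define H' where "H' v = indicator S v *\<^sub>R H v" for v
  have H'_meas[measurable]: "H' \<in> borel_measurable borel"
    unfolding H'_def[abs_def] by (rule borel_measurable_continuous_on_indicator[OF feas_borel Hc])
  define \<Phi> where "\<Phi> n v = (v - y)^2 / (2 * eta) + (H' v - indicator S v * H y) + real n * C" for n v
  have \<Phi>S: "\<Phi> n v = (v - y)^2 / (2 * eta) + (H v - H y) + real n * C" if "v \<in> S" for n v
    using that by (simp add: \<Phi>_def H'_def)
  have \<Phi>_meas: "\<Phi> n \<in> borel_measurable borel" for n unfolding \<Phi>_def[abs_def] by measurable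
  have \<Phi>_nn: "0 \<le> \<Phi> n v" if "v \<in> S" for n v
    using that opt[OF that] eta C0 by (simp add: \<Phi>S)
  have hx2: "integrable D (\<lambda>\<xi>. (hx x \<xi>)^2)" if "x \<in> S" for x using hx2_K2(1)[OF that] K2 that by blast
  have hx2b: "(\<integral>\<xi>. (hx x \<xi>)^2 \<partial>D) - (Hd x)^2 \<le> K2^2" if "x \<in> S" for x using hx2_K2(2)[OF that] K2 that by blast
  have cxy: "H x - H y \<le> Hd x * (x - y)" if "x \<in> S" for x
    using conv[OF that y] by (simp add: algebra_simps)
  have step: "(\<integral>\<^sup>+v. (if v \<in> S then ennreal (\<Phi> n v) else \<infinity>) \<partial>K x) \<le> ennreal (\<Phi> (Suc n) x - (H x - H y))"
    if x: "x \<in> S" for n x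
  proof -
    define \<alpha> where "\<alpha> = (x - y)^2 / (2 * eta) + Hd x * (x - y) + (Hd x)^2 / (2 * c) + real n * C"
    define \<beta> where "\<beta> = - (x - y) - Hd x / c"
    define \<gamma> where "\<gamma> = 1 / (2 * c)"
    have le: "\<Phi> n (proj l u (x - eta * g)) \<le> \<alpha> + \<beta> * g + \<gamma> * g^2" for g
    proof -
      define p where "p = proj l u (x - eta * g)"
      have pS: "p \<in> S" unfolding p_def by (rule proj_S)
      have h1: "H p - H y \<le> Hd x * (p - y) + L / 2 * (p - x)^2"
      proof -
        have "H p \<le> H x + Hd x * (p - x) + L / 2 * (p - x)^2"
          by (rule descent[OF der lip feas_interval x pS]) auto
        moreover have "Hd x * (p - x) + Hd x * (x - y) = Hd x * (p - y)" by (simp add: algebra_simps)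
        ultimately show ?thesis using cxy[OF x] by linarith
      qed
      have h2: "(y - p) * (x - eta * g - p) \<le> 0" unfolding p_def by (rule proj_nonexp[OF y])
      have q: "(p - y)^2 / (2 * eta) + (H p - H y) \<le> (x - y)^2 / (2 * eta) + (Hd x - g) * (x - y) + (Hd x - g)^2 / (2 * (1 / eta - L))"
        by (rule quad_ii_alg[OF eta _ h1 h2]) (use c0 in \<open>simp add: c_def\<close>)
      have "(x - y)^2 / (2 * eta) + (Hd x - g) * (x - y) + (Hd x - g)^2 / (2 * (1 / eta - L)) + real n * C
          = \<alpha> + \<beta> * g + \<gamma> * g^2"
        unfolding \<alpha>_def \<beta>_def \<gamma>_def c_def[symmetric] using c0
        by (simp add: field_simps power2_eq_square)
      then show ?thesis using q \<Phi>S[OF pS, of n] unfolding p_def by linarith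
    qed
    have sb: "(\<integral>\<^sup>+v. (if v \<in> S then ennreal (\<Phi> n v) else \<infinity>) \<partial>K x)
        \<le> ennreal (\<alpha> + \<beta> * Hd x + \<gamma> * ((\<integral>\<xi>. (hx x \<xi>)^2 \<partial>D) + 2 * K3))"
      by (rule step_bound[OF x hx2[OF x] _ \<Phi>_meas \<Phi>_nn le]) (use c0 in \<open>simp_all add: \<gamma>_def\<close>)
    have "\<alpha> + \<beta> * Hd x + \<gamma> * ((\<integral>\<xi>. (hx x \<xi>)^2 \<partial>D) + 2 * K3)
        = (x - y)^2 / (2 * eta) + real n * C + ((\<integral>\<xi>. (hx x \<xi>)^2 \<partial>D) - (Hd x)^2 + 2 * K3) / (2 * c)"
      unfolding \<alpha>_def \<beta>_def \<gamma>_def using c0 by (simp add: field_simps power2_eq_square)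
    also have "\<dots> \<le> (x - y)^2 / (2 * eta) + real n * C + C"
      unfolding C_def using hx2b[OF x] c0 by (simp add: divide_right_mono)
    also have "\<dots> = \<Phi> (Suc n) x - (H x - H y)" using \<Phi>S[OF x, of "Suc n"] by (simp add: algebra_simps)
    finally show ?thesis using sb by (meson ennreal_leI order.trans)
  qed
  have step_nn: "H x - H y \<le> \<Phi> (Suc n) x" if x: "x \<in> S" for n x
    using \<Phi>S[OF x, of "Suc n"] eta C0 by simp
  have rb: "(\<integral>\<^sup>+p. (if snd p / real T \<in> S then ennreal (H (snd p / real T) - H y) else \<infinity>) \<partial>cba_run K T x1 (real 0 * x1))
      \<le> ennreal ((real 0 * (H x1 - H y) + \<Phi> T x1) / real T)"
    by (rule run_bound[where \<Phi>=\<Phi> and y=y and T=T and x=x1 and m=x1 and k=0 and n=T,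
          OF T y opt Hc conv hx2 \<Phi>_meas \<Phi>_nn step step_nn x1 x1]) auto
  have "(\<integral>p. H (snd p / real T) - H y \<partial>cba_run K T x1 0) \<le> \<Phi> T x1 / real T"
    by (rule bochner_bound) (use rb \<Phi>_nn[OF x1] T in auto)
  also have "\<Phi> T x1 / real T = (x1 - y)^2 / (2 * eta * real T) + (H x1 - H y) / real T + C"
    unfolding \<Phi>S[OF x1, of T] using T eta by (simp add: field_simps)
  also have "\<dots> \<le> (x1 - y)^2 / (2 * eta * real T) + (H x1 - H y) / real T + (K2^2 + 2 * K3) / (1 / eta - L)"
  proof -
    have "C \<le> (K2^2 + 2 * K3) / c"
      unfolding C_def using c0 C3_K by (simp add: field_simps)
    then show ?thesis by (simp add: c_def)
  qed
  finally show ?thesis .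
qed

end

theorem lemma1:
  fixes D :: "real measure"
    and h hx hxz fm fp :: "real \<Rightarrow> real \<Rightarrow> real"
    and hm hp H Hd :: "real \<Rightarrow> real"
    and l u :: ereal
    and mu K1 K2 K3 L eta x1 xstar :: real
    and T :: nat
  defines "F \<equiv> cdf_of D"
    and "slo \<equiv> Inf (ereal ` supp_meas D)"
    and "shi \<equiv> Sup (ereal ` supp_meas D)"
  assumes lu: "l \<le> u"
    (* the random variable xi and (A1) *)
    and D_prob: "prob_space D" and D_sets: "sets D = sets borel"
    and A1: "\<And>x. measure D {x} = 0"
    (* H(x) = E h(x,xi) *)
    and H_def: "\<And>x. x \<in> feas l u \<Longrightarrow> integrable D (h x) \<and> H x = (\<integral>xi. h x xi \<partial>D)"
    (* (A2) *)
    and A2_left: "\<And>xi. (\<forall>x\<in>{y \<in> feas l u. y < xi}.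
          ((\<lambda>y. h y xi) has_real_derivative hx x xi) (at x within {y \<in> feas l u. y < xi}))
        \<and> continuous_on {y \<in> feas l u. y < xi} (\<lambda>y. hx y xi)"
    and A2_right: "\<And>xi. (\<forall>x\<in>{y \<in> feas l u. xi < y}.
          ((\<lambda>y. h y xi) has_real_derivative hx x xi) (at x within {y \<in> feas l u. xi < y}))
        \<and> continuous_on {y \<in> feas l u. xi < y} (\<lambda>y. hx y xi)"
    and A2_hm: "\<And>x. x \<in> feas l u \<Longrightarrow> ((\<lambda>z. hx x z) \<longlongrightarrow> hm x) (at_left x)"
    and A2_hp: "\<And>x. x \<in> feas l u \<Longrightarrow> ((\<lambda>z. hx x z) \<longlongrightarrow> hp x) (at_right x)"
    (* (A3) *)
    and A3: "\<And>x xi. x \<in> feas l u \<Longrightarrow> x \<noteq> xi \<Longrightarrow>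
        ((\<lambda>z. hx x z) has_real_derivative hxz x xi) (at xi)"
    (* (A4) *)
    and A4_diff: "\<And>x. x \<in> feas l u \<Longrightarrow> (H has_real_derivative Hd x) (at x within feas l u)"
    and A4_mu: "mu \<ge> 0"
    and A4_conv: "\<And>x y. x \<in> feas l u \<Longrightarrow> y \<in> feas l u \<Longrightarrow>
        H y \<ge> H x + Hd x * (y - x) + mu / 2 * (y - x)^2"
    and A4_grad: "\<And>x. x \<in> feas l u \<Longrightarrow> integrable D (hx x) \<and> (\<integral>xi. hx x xi \<partial>D) = Hd x"
    (* (C1) *)
    and C1_nonneg: "\<And>x z. x \<in> feas l u \<Longrightarrow> fm x z \<ge> 0"
    and C1_meas: "\<And>x. x \<in> feas l u \<Longrightarrow> fm x \<in> borel_measurable borel"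
    and C1_zero: "\<And>x z. x \<in> feas l u \<Longrightarrow> z \<ge> x \<Longrightarrow> fm x z = 0"
    and C1_pos: "\<And>x z. x \<in> feas l u \<Longrightarrow> slo \<le> ereal z \<Longrightarrow> z < x \<Longrightarrow> fm x z > 0"
    and C1_int: "\<And>x. x \<in> feas l u \<Longrightarrow> (\<integral>\<^sup>+ z. ennreal (fm x z) \<partial>lborel) = 1"
    (* (C2) *)
    and C2_nonneg: "\<And>x z. x \<in> feas l u \<Longrightarrow> fp x z \<ge> 0"
    and C2_meas: "\<And>x. x \<in> feas l u \<Longrightarrow> fp x \<in> borel_measurable borel"
    and C2_zero: "\<And>x z. x \<in> feas l u \<Longrightarrow> z \<le> x \<Longrightarrow> fp x z = 0"
    and C2_pos: "\<And>x z. x \<in> feas l u \<Longrightarrow> ereal z \<le> shi \<Longrightarrow> x < z \<Longrightarrow> fp x z > 0"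
    and C2_int: "\<And>x. x \<in> feas l u \<Longrightarrow> (\<integral>\<^sup>+ z. ennreal (fp x z) \<partial>lborel) = 1"
    (* (C3) *)
    and C3_K: "K3 \<ge> 0"
    and C3_left: "\<And>x. x \<in> feas l u \<Longrightarrow>
        (\<integral>\<^sup>+ z \<in> {z. slo \<le> ereal z \<and> z < x}. ennreal (F z * (hxz x z)^2 / fm x z) \<partial>lborel)
          \<le> ennreal K3"
    and C3_right: "\<And>x. x \<in> feas l u \<Longrightarrow>
        (\<integral>\<^sup>+ z \<in> {z. x < z \<and> ereal z \<le> shi}. ennreal ((1 - F z) * (hxz x z)^2 / fp x z) \<partial>lborel)
          \<le> ennreal K3"
    (* CBA data, optimal solution *)
    and x1: "x1 \<in> feas l u"
    and T: "T \<ge> 1"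
    and eta: "eta > 0"
    and opt: "xstar \<in> feas l u" "\<And>y. y \<in> feas l u \<Longrightarrow> H xstar \<le> H y"
  shows
    "((\<forall>x\<in>feas l u. (\<integral>\<^sup>+ xi. ennreal ((hx x xi)^2) \<partial>D) \<le> ennreal (K1^2)) \<longrightarrow>
        (\<integral>p. H (snd p / real T) - H xstar
            \<partial>cba_run (cba_step D fm fp hm hp hxz eta l u) T x1 0)
          \<le> (x1 - xstar)^2 / (2 * eta * real T) + eta * (K1^2 + 2 * K3) / 2)
     \<and>
     ((L-lipschitz_on (feas l u) Hd \<and>
       (\<forall>x\<in>feas l u. (\<integral>\<^sup>+ xi. ennreal ((hx x xi - Hd x)^2) \<partial>D) \<le> ennreal (K2^2)) \<and>
       eta * L < 1) \<longrightarrow>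
        (\<integral>p. H (snd p / real T) - H xstar
            \<partial>cba_run (cba_step D fm fp hm hp hxz eta l u) T x1 0)
          \<le> (x1 - xstar)^2 / (2 * eta * real T) + (H x1 - H xstar) / real T
             + (K2^2 + 2 * K3) / (1 / eta - L))"
proof -
  have S_ne: "feas l u \<noteq> {}" using x1 by auto
  have C1_pos': "\<And>x z. x \<in> feas l u \<Longrightarrow> Inf (ereal ` supp_meas D) \<le> ereal z \<Longrightarrow> z < x \<Longrightarrow> fm x z > 0"
    using C1_pos unfolding slo_def by blast
  have C2_pos': "\<And>x z. x \<in> feas l u \<Longrightarrow> ereal z \<le> Sup (ereal ` supp_meas D) \<Longrightarrow> x < z \<Longrightarrow> fp x z > 0"
    using C2_pos unfolding shi_def by blast
  have C3_left': "\<And>x. x \<in> feas l u \<Longrightarrow>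
        (\<integral>\<^sup>+ z \<in> {z. Inf (ereal ` supp_meas D) \<le> ereal z \<and> z < x}. ennreal (cdf_of D z * (hxz x z)^2 / fm x z) \<partial>lborel)
          \<le> ennreal K3"
    using C3_left unfolding slo_def F_def by blast
  have C3_right': "\<And>x. x \<in> feas l u \<Longrightarrow>
        (\<integral>\<^sup>+ z \<in> {z. x < z \<and> ereal z \<le> Sup (ereal ` supp_meas D)}. ennreal ((1 - cdf_of D z) * (hxz x z)^2 / fp x z) \<partial>lborel)
          \<le> ennreal K3"
    using C3_right unfolding shi_def F_def by blast
  interpret cba D hx hxz fm fp hm hp H Hd l u K3 eta
    by (rule cba.intro[OF lu D_prob D_sets A1 A2_hm A2_hp A3 A4_grad C1_nonneg C1_meas C1_zero C1_pos' C1_int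
          C2_nonneg C2_meas C2_zero C2_pos' C2_int C3_K C3_left' C3_right' eta S_ne])
  have Hc: "continuous_on (feas l u) H"
    using A4_diff by (auto simp: continuous_on_eq_continuous_within intro: DERIV_continuous)
  have conv: "H a + Hd a * (b - a) \<le> H b" if "a \<in> feas l u" "b \<in> feas l u" for a b
  proof -
    have "0 \<le> mu / 2 * (b - a)^2" using A4_mu by simp
    then show ?thesis using A4_conv[OF that] by linarith
  qed
  show ?thesis
  proof (intro conjI impI)
    assume K1: "\<forall>x\<in>feas l u. (\<integral>\<^sup>+ xi. ennreal ((hx x xi)^2) \<partial>D) \<le> ennreal (K1^2)"
    show "(\<integral>p. H (snd p / real T) - H xstar \<partial>cba_run (cba_step D fm fp hm hp hxz eta l u) T x1 0)
          \<le> (x1 - xstar)^2 / (2 * eta * real T) + eta * (K1^2 + 2 * K3) / 2"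
      by (rule final_i[OF T x1 opt(1) opt(2) Hc conv K1])
  next
    assume h: "L-lipschitz_on (feas l u) Hd \<and>
       (\<forall>x\<in>feas l u. (\<integral>\<^sup>+ xi. ennreal ((hx x xi - Hd x)^2) \<partial>D) \<le> ennreal (K2^2)) \<and>
       eta * L < 1"
    show "(\<integral>p. H (snd p / real T) - H xstar \<partial>cba_run (cba_step D fm fp hm hp hxz eta l u) T x1 0)
          \<le> (x1 - xstar)^2 / (2 * eta * real T) + (H x1 - H xstar) / real T
             + (K2^2 + 2 * K3) / (1 / eta - L)"
      using h by (intro final_ii[OF T x1 opt(1) opt(2) Hc conv A4_diff]) auto
  qed
qed

end
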